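(* Let $\Omega\subseteq\mathbb R^d$, $F$ and $\mathcal I$ be as below, and suppose the PDE $F(x,V(x),DV(x),D^2V(x),[\mathcal IV](x))=0$ on $\overline\Omega$ satisfies the comparison principle. Let $(S,\mathcal I^h)_{h>0}$ be a numerical scheme that is monotone, stable, nonlocally consistent, and satisfies the technical condition (T). For each $h>0$ let $V^h\in B(\overline\Omega)$ be a solution of the scheme, i.e. $S(h,x,V^h,[\mathcal I^hV^h](x))=0$ for all $x\in\overline\Omega$. Then, as $h\to0$, $V^h$ converges locally uniformly on $\overline\Omega$ to the unique bounded viscosity solution of the PDE.
   Context: $\mathcal S^d$ is the set of real symmetric $d\times d$ matrices; $B(\overline\Omega)$ the bounded real functions on $\overline\Omega$. $F:\overline\Omega\times\mathbb R\times\mathbb R^d\times\mathcal S^d\times\mathbb R\to\mathbb R$ is locally bounded and $\mathcal I$ maps $B(\overline\Omega)$ into real functions on $\overline\Omega$. $C^2(\overline\Omega)$ means functions that are $C^2$ on a neighbourhood of $\overline\Omega$. For a locally bounded $u$ on a metric space, $u^*(x)=\limsup_{y\to x}u(y)$ and $u_*(x)=\liminf_{y\to x}u(y)$; $F^*,F_*$ are the envelopes of $F$ in all its arguments. An upper (resp. lower) semicontinuous $V:\overline\Omega\to\mathbb R$ is a viscosity subsolution (resp. supersolution) if for every $\varphi\in C^2(\overline\Omega)$ and $x\in\overline\Omega$ at which $V-\varphi$ has a local maximum (resp. minimum) relative to $\overline\Omega$, $F_*(x,V(x),D\varphi(x),D^2\varphi(x),[\mathcal IV](x))\le0$ (resp.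 $F^*(\ldots)\ge0$); a viscosity solution is both. Comparison principle: whenever $U,V\in B(\overline\Omega)$ are a subsolution and supersolution, $U\le V$. A scheme is a pair of maps $S:(0,\infty)\times\overline\Omega\times B(\overline\Omega)\times\mathbb R\to\mathbb R$ and $\mathcal I^h:B(\overline\Omega)\to B(\overline\Omega)$. Monotone: $S(h,x,V,\ell)\le S(h,x,\hat V,\ell)$ whenever $V\ge\hat V$ and $V(x)=\hat V(x)$. Stable: there is $C$ with $\|V^h\|_\infty\le C$ for every solution $V^h$ of the scheme and every $h$. Half-relaxed limits of a locally bounded family $(u^h)$: $\overline u(x)=\limsup_{h\to0,y\to x}u^h(y)$, $\underline u(x)=\liminf_{h\to0,y\to x}u^h(y)$. Nonlocally consistent: for every uniformly bounded family $(u^h)_{h>0}\subset B(\overline\Omega)$, every $\varphi\in C^2(\overline\Omega)$ and $x\in\overline\Omega$, $\liminf_{h\to0,y\to x,\xi\to0}S(h,y,\varphi+\xi,[\mathcal I^hu^h](y))\ge F_*(x,\varphi(x),D\varphi(x),D^2\varphi(x),[\mathcal I\overline u](x))$ and $\limsup_{h\to0,y\to x,\xi\to0}S(h,y,\varphi+\xi,[\mathcal I^hu^h](y))\le F^*(x,\varphi(x),D\varphi(x),D^2\varphi(x),[\mathcal I\underline u](x))$ ($\xi$ ranges over real constants). (T): there is $f:(0,\infty)\times\overline\Omega\to[0,\infty)$ with $\lim_{h\to0,y\to x}f(y,h)=0$ for all $x$ and $|S(h,x,\psi,\ell)-S(h,x,\varphi,\ell)|\le f(x,h)$ for all $h,x,\ell$,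 $\varphi\in B(\overline\Omega)$ and $\psi=\varphi\pm e^{-1/h}\mathbf 1_{\{x\}}$. *)

theory Defs
  imports "HOL-Analysis.Analysis"
begin

type_synonym 'n pt = "real^'n"
type_synonym 'n mat = "real^'n^'n"

text \<open>Restriction of a function to a set (extended by 0): functions on the closed set
  are represented as total functions that vanish outside it.\<close>
definition ext :: "'a set \<Rightarrow> ('a \<Rightarrow> real) \<Rightarrow> 'a \<Rightarrow> real" where
  "ext A u = (\<lambda>x. if x \<in> A then u x else 0)"

definition bdd_on :: "'a set \<Rightarrow> ('a \<Rightarrow> real) \<Rightarrow> bool" where
  "bdd_on A u \<longleftrightarrow> (\<exists>M. \<forall>x\<in>A. \<bar>u x\<bar> \<le> M)"

definition grad :: "('n::finite pt \<Rightarrow> real) \<Rightarrow> 'n pt \<Rightarrow> 'n pt" where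
  "grad \<phi> x = (\<chi> i. frechet_derivative \<phi> (at x) (axis i 1))"

definition hess :: "('n::finite pt \<Rightarrow> real) \<Rightarrow> 'n pt \<Rightarrow> 'n mat" where
  "hess \<phi> x = (\<chi> i j. frechet_derivative (\<lambda>y. grad \<phi> y $ i) (at x) (axis j 1))"

definition C2_nbhd :: "'n::finite pt set \<Rightarrow> ('n pt \<Rightarrow> real) \<Rightarrow> bool" where
  "C2_nbhd C \<phi> \<longleftrightarrow> (\<exists>U. open U \<and> C \<subseteq> U \<and>
      (\<forall>x\<in>U. \<phi> differentiable (at x) \<and> grad \<phi> differentiable (at x)) \<and>
      continuous_on U (hess \<phi>))"

definition usc_env :: "'a::topological_space set \<Rightarrow> ('a \<Rightarrow> real) \<Rightarrow> 'a \<Rightarrow> ereal" where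
  "usc_env A u x = Limsup (inf (nhds x) (principal A)) (\<lambda>y. ereal (u y))"

definition lsc_env :: "'a::topological_space set \<Rightarrow> ('a \<Rightarrow> real) \<Rightarrow> 'a \<Rightarrow> ereal" where
  "lsc_env A u x = Liminf (inf (nhds x) (principal A)) (\<lambda>y. ereal (u y))"

definition usc_on :: "'a::topological_space set \<Rightarrow> ('a \<Rightarrow> real) \<Rightarrow> bool" where
  "usc_on A u \<longleftrightarrow> (\<forall>x\<in>A. usc_env A u x \<le> ereal (u x))"

definition lsc_on :: "'a::topological_space set \<Rightarrow> ('a \<Rightarrow> real) \<Rightarrow> bool" where
  "lsc_on A u \<longleftrightarrow> (\<forall>x\<in>A. lsc_env A u x \<ge> ereal (u x))"

definition locally_bounded_on :: "'a::metric_space set \<Rightarrow> ('a \<Rightarrow> real) \<Rightarrow> bool" where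
  "locally_bounded_on A u \<longleftrightarrow>
     (\<forall>x\<in>A. \<exists>e>0. \<exists>M. \<forall>y\<in>A \<inter> ball x e. \<bar>u y\<bar> \<le> M)"

definition Sym :: "'n::finite mat set" where
  "Sym = {X. transpose X = X}"

definition Fdom :: "'n::finite pt set \<Rightarrow> ('n pt \<times> real \<times> 'n pt \<times> 'n mat \<times> real) set" where
  "Fdom \<Omega> = closure \<Omega> \<times> UNIV \<times> UNIV \<times> Sym \<times> UNIV"

definition Fun5 :: "('n::finite pt \<Rightarrow> real \<Rightarrow> 'n pt \<Rightarrow> 'n mat \<Rightarrow> real \<Rightarrow> real)
    \<Rightarrow> ('n pt \<times> real \<times> 'n pt \<times> 'n mat \<times> real) \<Rightarrow> real" where
  "Fun5 F = (\<lambda>(x, r, q, X, l). F x r q X l)"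

definition Fupper where "Fupper \<Omega> F x r q X l = usc_env (Fdom \<Omega>) (Fun5 F) (x, r, q, X, l)"
definition Flower where "Flower \<Omega> F x r q X l = lsc_env (Fdom \<Omega>) (Fun5 F) (x, r, q, X, l)"

definition loc_max_rel :: "'n::finite pt set \<Rightarrow> ('n pt \<Rightarrow> real) \<Rightarrow> 'n pt \<Rightarrow> bool" where
  "loc_max_rel C w x \<longleftrightarrow> (\<exists>e>0. \<forall>y\<in>C \<inter> ball x e. w y \<le> w x)"

definition loc_min_rel :: "'n::finite pt set \<Rightarrow> ('n pt \<Rightarrow> real) \<Rightarrow> 'n pt \<Rightarrow> bool" where
  "loc_min_rel C w x \<longleftrightarrow> (\<exists>e>0. \<forall>y\<in>C \<inter> ball x e. w x \<le> w y)"

definition visc_sub where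
  "visc_sub \<Omega> F I V \<longleftrightarrow> usc_on (closure \<Omega>) V \<and>
    (\<forall>\<phi> x. C2_nbhd (closure \<Omega>) \<phi> \<longrightarrow> x \<in> closure \<Omega> \<longrightarrow>
       loc_max_rel (closure \<Omega>) (\<lambda>y. V y - \<phi> y) x \<longrightarrow>
       Flower \<Omega> F x (V x) (grad \<phi> x) (hess \<phi> x) (I (ext (closure \<Omega>) V) x) \<le> 0)"

definition visc_super where
  "visc_super \<Omega> F I V \<longleftrightarrow> lsc_on (closure \<Omega>) V \<and>
    (\<forall>\<phi> x. C2_nbhd (closure \<Omega>) \<phi> \<longrightarrow> x \<in> closure \<Omega> \<longrightarrow>
       loc_min_rel (closure \<Omega>) (\<lambda>y. V y - \<phi> y) x \<longrightarrow>
       Fupper \<Omega> F x (V x) (grad \<phi> x) (hess \<phi> x) (I (ext (closure \<Omega>) V) x) \<ge> 0)"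

definition visc_sol where
  "visc_sol \<Omega> F I V \<longleftrightarrow> visc_sub \<Omega> F I V \<and> visc_super \<Omega> F I V"

definition comparison_principle where
  "comparison_principle \<Omega> F I \<longleftrightarrow>
    (\<forall>U V. bdd_on (closure \<Omega>) U \<longrightarrow> bdd_on (closure \<Omega>) V \<longrightarrow>
       visc_sub \<Omega> F I U \<longrightarrow> visc_super \<Omega> F I V \<longrightarrow> (\<forall>x\<in>closure \<Omega>. U x \<le> V x))"

definition scheme_monotone where
  "scheme_monotone \<Omega> S \<longleftrightarrow>
    (\<forall>h>0. \<forall>x\<in>closure \<Omega>. \<forall>V W l. bdd_on (closure \<Omega>) V \<longrightarrow> bdd_on (closure \<Omega>) W \<longrightarrow>
       (\<forall>y\<in>closure \<Omega>. V y \<ge> W y) \<longrightarrow> V x = W x \<longrightarrow>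
       S h x (ext (closure \<Omega>) V) l \<le> S h x (ext (closure \<Omega>) W) l)"

definition scheme_solution where
  "scheme_solution \<Omega> S Ih h V \<longleftrightarrow> bdd_on (closure \<Omega>) V \<and>
    (\<forall>x\<in>closure \<Omega>. S h x (ext (closure \<Omega>) V) (Ih h (ext (closure \<Omega>) V) x) = 0)"

definition scheme_stable where
  "scheme_stable \<Omega> S Ih \<longleftrightarrow>
    (\<exists>C. \<forall>h>0. \<forall>V. scheme_solution \<Omega> S Ih h V \<longrightarrow> (\<forall>x\<in>closure \<Omega>. \<bar>V x\<bar> \<le> C))"

definition hr_limsup :: "'n::finite pt set \<Rightarrow> (real \<Rightarrow> 'n pt \<Rightarrow> real) \<Rightarrow> 'n pt \<Rightarrow> ereal" where
  "hr_limsup C u x = Limsup (at_right 0 \<times>\<^sub>F inf (nhds x) (principal C))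
      (\<lambda>(h, y). ereal (u h y))"

definition hr_liminf :: "'n::finite pt set \<Rightarrow> (real \<Rightarrow> 'n pt \<Rightarrow> real) \<Rightarrow> 'n pt \<Rightarrow> ereal" where
  "hr_liminf C u x = Liminf (at_right 0 \<times>\<^sub>F inf (nhds x) (principal C))
      (\<lambda>(h, y). ereal (u h y))"

definition nonlocally_consistent where
  "nonlocally_consistent \<Omega> F I S Ih \<longleftrightarrow>
    (\<forall>u \<phi> x. (\<exists>M. \<forall>h>0. \<forall>y\<in>closure \<Omega>. \<bar>u h y\<bar> \<le> M) \<longrightarrow>
       C2_nbhd (closure \<Omega>) \<phi> \<longrightarrow> x \<in> closure \<Omega> \<longrightarrow>
       (let C = closure \<Omega>;
            G = at_right 0 \<times>\<^sub>F inf (nhds x) (principal C) \<times>\<^sub>F nhds 0;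
            s = (\<lambda>(h, y, \<xi>). ereal (S h y (ext C (\<lambda>z. \<phi> z + \<xi>)) (Ih h (ext C (u h)) y)))
        in Liminf G s \<ge>
             Flower \<Omega> F x (\<phi> x) (grad \<phi> x) (hess \<phi> x)
               (I (ext C (\<lambda>z. real_of_ereal (hr_limsup C u z))) x)
         \<and> Limsup G s \<le>
             Fupper \<Omega> F x (\<phi> x) (grad \<phi> x) (hess \<phi> x)
               (I (ext C (\<lambda>z. real_of_ereal (hr_liminf C u z))) x)))"

definition condition_T where
  "condition_T \<Omega> S \<longleftrightarrow>
    (\<exists>f :: 'n::finite pt \<Rightarrow> real \<Rightarrow> real.
       (\<forall>x h. x \<in> closure \<Omega> \<longrightarrow> h > 0 \<longrightarrow> f x h \<ge> 0) \<and>
       (\<forall>x\<in>closure \<Omega>. ((\<lambda>(y, h). f y h) \<longlongrightarrow> 0)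
            (inf (nhds x) (principal (closure \<Omega>)) \<times>\<^sub>F at_right 0)) \<and>
       (\<forall>h>0. \<forall>x\<in>closure \<Omega>. \<forall>l \<phi>. bdd_on (closure \<Omega>) \<phi> \<longrightarrow>
          (\<forall>\<sigma>\<in>{1, -1}.
             \<bar>S h x (ext (closure \<Omega>) (\<lambda>y. \<phi> y + \<sigma> * exp (-1/h) * (if y = x then 1 else 0))) l
              - S h x (ext (closure \<Omega>) \<phi>) l\<bar> \<le> f x h)))"

end

theory Submission
  imports Defs
begin

definition outer :: "real^'n \<Rightarrow> real^'n \<Rightarrow> real^'n^'n" where
  "outer a b = (\<chi> i j. a$i * b$j)"

lemma outer_mult: "outer a b *v v = (b \<bullet> v) *\<^sub>R a"
  by (simp add: vec_eq_iff outer_def matrix_vector_mult_def inner_vec_def sum_distrib_left mult_ac)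

lemma mat_add_mult: "(A + B) *v v = A *v v + B *v (v::real^'n)"
  by (simp add: vec_eq_iff matrix_vector_mult_def sum.distrib algebra_simps)

lemma mat_scale_mult: "(c *\<^sub>R A) *v v = c *\<^sub>R (A *v (v::real^'n))"
  by (simp add: vec_eq_iff matrix_vector_mult_def sum_distrib_left algebra_simps)

definition C2w :: "'n::finite pt set \<Rightarrow> ('n pt \<Rightarrow> real) \<Rightarrow> ('n pt \<Rightarrow> 'n pt) \<Rightarrow> ('n pt \<Rightarrow> 'n mat) \<Rightarrow> bool" where
  "C2w U f g H \<longleftrightarrow> (\<forall>y\<in>U. (f has_derivative (\<lambda>v. g y \<bullet> v)) (at y) \<and> (g has_derivative (\<lambda>v. H y *v v)) (at y))
     \<and> continuous_on U H"

lemma C2w_grad: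
  assumes "C2w U f g H" "y \<in> U"
  shows "grad f y = g y"
proof -
  have "(f has_derivative (\<lambda>v. g y \<bullet> v)) (at y)" using assms by (auto simp: C2w_def)
  hence "frechet_derivative f (at y) = (\<lambda>v. g y \<bullet> v)" using frechet_derivative_at by metis
  thus ?thesis by (simp add: grad_def vec_eq_iff inner_axis)
qed

lemma C2w_hess:
  assumes "C2w U f g H" "y \<in> U" "open U"
  shows "hess f y = H y"
proof -
  have gd: "(g has_derivative (\<lambda>v. H y *v v)) (at y)" using assms by (auto simp: C2w_def)
  have "\<And>i. frechet_derivative (\<lambda>z. grad f z $ i) (at y) = (\<lambda>v. (H y *v v) $ i)"
  proof -
    fix i
    have "((\<lambda>z. g z $ i) has_derivative (\<lambda>v. (H y *v v) $ i)) (at y)"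
      using bounded_linear.has_derivative[OF bounded_linear_vec_nth gd] .
    hence "((\<lambda>z. grad f z $ i) has_derivative (\<lambda>v. (H y *v v) $ i)) (at y)"
      by (rule has_derivative_transform_within_open[OF _ assms(3) assms(2)])
         (use assms(1) C2w_grad in metis)
    thus "frechet_derivative (\<lambda>z. grad f z $ i) (at y) = (\<lambda>v. (H y *v v) $ i)"
      using frechet_derivative_at by metis
  qed
  thus ?thesis by (simp add: hess_def vec_eq_iff matrix_vector_mult_basis column_def)
qed

lemma C2w_C2_nbhd:
  assumes "C2w U f g H" "open U" "C \<subseteq> U"
  shows "C2_nbhd C f"
  unfolding C2_nbhd_def
proof (intro exI[of _ U] conjI ballI)
  show "continuous_on U (hess f)"
  proof -
    have "continuous_on U H" using assms(1) by (simp add: C2w_def)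
    thus ?thesis by (rule continuous_on_eq) (use assms C2w_hess in metis)
  qed
  fix x assume x: "x \<in> U"
  show "f differentiable at x" using assms x unfolding C2w_def differentiable_def by blast
  have "(g has_derivative (\<lambda>v. H x *v v)) (at x)" using assms x by (auto simp: C2w_def)
  hence "(grad f has_derivative (\<lambda>v. H x *v v)) (at x)"
    by (rule has_derivative_transform_within_open[OF _ assms(2) x]) (use assms(1) C2w_grad in metis)
  thus "grad f differentiable at x" unfolding differentiable_def by blast
qed (use assms in auto)

lemma lin_expand:
  fixes L :: "real^'n \<Rightarrow> 'b::real_vector"
  assumes "linear L"
  shows "L v = (\<Sum>i\<in>UNIV. v$i *\<^sub>R L (axis i 1))"
proof -
  have "v = (\<Sum>i\<in>UNIV. v$i *\<^sub>R axis i 1)" using basis_expansion[of v] by (simp add: scalar_mult_eq_scaleR)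
  hence "L v = L (\<Sum>i\<in>UNIV. v$i *\<^sub>R axis i 1)" by simp
  also have "\<dots> = (\<Sum>i\<in>UNIV. v$i *\<^sub>R L (axis i 1))"
    using assms by (simp add: linear_sum linear_scale)
  finally show ?thesis .
qed

lemma C2_nbhd_C2w:
  assumes "C2_nbhd C f"
  shows "\<exists>U. open U \<and> C \<subseteq> U \<and> C2w U f (grad f) (hess f)"
proof -
  obtain U where U: "open U" "C \<subseteq> U" "\<forall>x\<in>U. f differentiable (at x) \<and> grad f differentiable (at x)"
     "continuous_on U (hess f)" using assms unfolding C2_nbhd_def by blast
  have "(f has_derivative (\<lambda>v. grad f y \<bullet> v)) (at y) \<and> (grad f has_derivative (\<lambda>v. hess f y *v v)) (at y)"
    if y: "y \<in> U" for y
  proof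
    have d1: "(f has_derivative frechet_derivative f (at y)) (at y)"
      using U(3) y frechet_derivative_works by blast
    have l1: "linear (frechet_derivative f (at y))" using d1 has_derivative_linear by blast
    have "frechet_derivative f (at y) = (\<lambda>v. grad f y \<bullet> v)"
    proof
      fix v show "frechet_derivative f (at y) v = grad f y \<bullet> v"
        using lin_expand[OF l1, of v] by (simp add: grad_def inner_vec_def mult.commute)
    qed
    thus "(f has_derivative (\<lambda>v. grad f y \<bullet> v)) (at y)" using d1 by simp
    have d2: "(grad f has_derivative frechet_derivative (grad f) (at y)) (at y)"
      using U(3) y frechet_derivative_works by blast
    define D where "D = frechet_derivative (grad f) (at y)"
    have l2: "linear D" using d2 has_derivative_linear unfolding D_def by blast
    have hij: "hess f y $ i $ j = D (axis j 1) $ i" for i j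
    proof -
      have "((\<lambda>z. grad f z $ i) has_derivative (\<lambda>v. D v $ i)) (at y)"
        using bounded_linear.has_derivative[OF bounded_linear_vec_nth d2] unfolding D_def .
      hence "frechet_derivative (\<lambda>z. grad f z $ i) (at y) = (\<lambda>v. D v $ i)"
        using frechet_derivative_at by metis
      thus ?thesis by (simp add: hess_def)
    qed
    have "D = (\<lambda>v. hess f y *v v)"
    proof
      fix v show "D v = hess f y *v v"
        using lin_expand[OF l2, of v]
        by (simp add: vec_eq_iff hij matrix_vector_mult_def sum_component mult.commute)
    qed
    thus "(grad f has_derivative (\<lambda>v. hess f y *v v)) (at y)" using d2 D_def by simp
  qed
  thus ?thesis using U unfolding C2w_def by blast
qed

lemma C2w_contg: "C2w U f g H \<Longrightarrow> continuous_on U g"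
  unfolding C2w_def by (meson continuous_at_imp_continuous_on has_derivative_continuous)

lemma C2w_contf: "C2w U f g H \<Longrightarrow> continuous_on U f"
  unfolding C2w_def by (meson continuous_at_imp_continuous_on has_derivative_continuous)

lemma continuous_on_nth: "continuous_on U a \<Longrightarrow> continuous_on U (\<lambda>y. a y $ i)"
  unfolding continuous_on_def by (auto intro: tendsto_vec_nth)

lemma continuous_on_outer:
  "continuous_on U a \<Longrightarrow> continuous_on U b \<Longrightarrow> continuous_on U (\<lambda>y. outer (a y) (b y))"
  unfolding outer_def by (intro continuous_on_vec_lambda continuous_on_mult continuous_on_nth)

lemma C2w_const: "C2w U (\<lambda>y. c) (\<lambda>y. 0) (\<lambda>y. 0)"
proof -
  have e: "((\<bullet>) (0::'a::finite pt)) = (\<lambda>v. 0)" "((*v) (0::'a mat)) = (\<lambda>v. 0)"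
    by (auto simp: fun_eq_iff vec_eq_iff matrix_vector_mult_def)
  show ?thesis unfolding C2w_def e by (auto intro: has_derivative_const)
qed

lemma C2w_add:
  assumes "C2w U f1 g1 H1" "C2w U f2 g2 H2"
  shows "C2w U (\<lambda>y. f1 y + f2 y) (\<lambda>y. g1 y + g2 y) (\<lambda>y. H1 y + H2 y)"
  using assms unfolding C2w_def
  by (auto intro!: has_derivative_add[THEN has_derivative_eq_rhs] continuous_on_add
      simp: inner_add_left mat_add_mult)

lemma C2w_minus:
  assumes "C2w U f g H"
  shows "C2w U (\<lambda>y. - f y) (\<lambda>y. - g y) (\<lambda>y. - H y)"
proof -
  have m: "(- A) *v v = - (A *v v)" for A :: "'a::finite mat" and v
    by (simp add: vec_eq_iff matrix_vector_mult_def sum_negf)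
  show ?thesis using assms unfolding C2w_def
    by (auto intro!: has_derivative_minus[THEN has_derivative_eq_rhs] continuous_on_minus simp: m)
qed

lemma C2w_mult:
  assumes "C2w U f1 g1 H1" "C2w U f2 g2 H2"
  shows "C2w U (\<lambda>y. f1 y * f2 y) (\<lambda>y. f1 y *\<^sub>R g2 y + f2 y *\<^sub>R g1 y)
     (\<lambda>y. f1 y *\<^sub>R H2 y + f2 y *\<^sub>R H1 y + outer (g2 y) (g1 y) + outer (g1 y) (g2 y))"
  unfolding C2w_def
proof (intro conjI ballI)
  fix y assume y: "y \<in> U"
  have a: "(f1 has_derivative (\<lambda>v. g1 y \<bullet> v)) (at y)" "(g1 has_derivative (\<lambda>v. H1 y *v v)) (at y)"
    "(f2 has_derivative (\<lambda>v. g2 y \<bullet> v)) (at y)" "(g2 has_derivative (\<lambda>v. H2 y *v v)) (at y)"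
    using assms y unfolding C2w_def by auto
  show "((\<lambda>y. f1 y * f2 y) has_derivative (\<lambda>v. (f1 y *\<^sub>R g2 y + f2 y *\<^sub>R g1 y) \<bullet> v)) (at y)"
    by (rule has_derivative_mult[OF a(1) a(3), THEN has_derivative_eq_rhs]) (auto simp: inner_add_left algebra_simps)
  show "((\<lambda>y. f1 y *\<^sub>R g2 y + f2 y *\<^sub>R g1 y) has_derivative
     (\<lambda>v. (f1 y *\<^sub>R H2 y + f2 y *\<^sub>R H1 y + outer (g2 y) (g1 y) + outer (g1 y) (g2 y)) *v v)) (at y)"
    by (rule has_derivative_add[OF has_derivative_scaleR[OF a(1) a(4)] has_derivative_scaleR[OF a(3) a(2)], THEN has_derivative_eq_rhs])
       (auto simp: mat_add_mult mat_scale_mult outer_mult algebra_simps)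
next
  show "continuous_on U (\<lambda>y. f1 y *\<^sub>R H2 y + f2 y *\<^sub>R H1 y + outer (g2 y) (g1 y) + outer (g1 y) (g2 y))"
    using assms C2w_contf[OF assms(1)] C2w_contg[OF assms(1)] C2w_contf[OF assms(2)] C2w_contg[OF assms(2)] unfolding C2w_def
    by (intro continuous_on_add continuous_on_scaleR continuous_on_outer) auto
qed

lemma C2w_comp:
  assumes "C2w U f g H"
    and w: "\<And>t. (w has_real_derivative w1 t) (at t)" "\<And>t. (w1 has_real_derivative w2 t) (at t)"
    and w2: "continuous_on UNIV w2"
  shows "C2w U (\<lambda>y. w (f y)) (\<lambda>y. w1 (f y) *\<^sub>R g y) (\<lambda>y. w1 (f y) *\<^sub>R H y + w2 (f y) *\<^sub>R outer (g y) (g y))"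
  unfolding C2w_def
proof (intro conjI ballI)
  fix y assume y: "y \<in> U"
  have a: "(f has_derivative (\<lambda>v. g y \<bullet> v)) (at y)" "(g has_derivative (\<lambda>v. H y *v v)) (at y)"
    using assms y unfolding C2w_def by auto
  have wd: "(w has_derivative (\<lambda>x. x * w1 t)) (at t)" "(w1 has_derivative (\<lambda>x. x * w2 t)) (at t)" for t
    by (rule has_derivative_eq_rhs[OF w(1)[unfolded has_field_derivative_def]], force simp: mult.commute)
       (rule has_derivative_eq_rhs[OF w(2)[unfolded has_field_derivative_def]], force simp: mult.commute)
  show "((\<lambda>y. w (f y)) has_derivative (\<lambda>v. (w1 (f y) *\<^sub>R g y) \<bullet> v)) (at y)"
    by (rule has_derivative_compose[OF a(1) wd(1), THEN has_derivative_eq_rhs]) (auto simp: algebra_simps)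
  have c1: "((\<lambda>y. w1 (f y)) has_derivative (\<lambda>v. (g y \<bullet> v) * w2 (f y))) (at y)"
    by (rule has_derivative_compose[OF a(1) wd(2)])
  show "((\<lambda>y. w1 (f y) *\<^sub>R g y) has_derivative (\<lambda>v. (w1 (f y) *\<^sub>R H y + w2 (f y) *\<^sub>R outer (g y) (g y)) *v v)) (at y)"
    by (rule has_derivative_scaleR[OF c1 a(2), THEN has_derivative_eq_rhs])
       (auto simp: mat_add_mult mat_scale_mult outer_mult algebra_simps)
next
  have cw1: "continuous_on UNIV w1" using w(2) by (meson DERIV_isCont continuous_at_imp_continuous_on)
  show "continuous_on U (\<lambda>y. w1 (f y) *\<^sub>R H y + w2 (f y) *\<^sub>R outer (g y) (g y))"
    using assms C2w_contf[OF assms(1)] C2w_contg[OF assms(1)] unfolding C2w_def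
    by (intro continuous_on_add continuous_on_scaleR continuous_on_outer
        continuous_on_compose2[OF cw1] continuous_on_compose2[OF w2]) auto
qed

lemma C2w_sq: "C2w U (\<lambda>z. (z - x) \<bullet> (z - x)) (\<lambda>z. 2 *\<^sub>R (z - x)) (\<lambda>z. 2 *\<^sub>R mat 1)"
  unfolding C2w_def
proof (intro conjI ballI)
  fix y
  show "((\<lambda>z. (z - x) \<bullet> (z - x)) has_derivative (\<lambda>v. (2 *\<^sub>R (y - x)) \<bullet> v)) (at y)"
    by (rule bounded_bilinear.FDERIV[OF bounded_bilinear_inner, OF has_derivative_diff[OF has_derivative_ident has_derivative_const] has_derivative_diff[OF has_derivative_ident has_derivative_const], THEN has_derivative_eq_rhs])
       (auto simp: inner_commute algebra_simps)
  show "((\<lambda>z. 2 *\<^sub>R (z - x)) has_derivative (\<lambda>v. (2 *\<^sub>R mat 1) *v v)) (at y)"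
    by (auto intro!: derivative_eq_intros simp: mat_scale_mult)
qed (auto intro: continuous_on_const)

lemma pw:
  fixes p p' :: "real \<Rightarrow> real"
  assumes d: "\<And>t. (p has_real_derivative p' t) (at t)" and p1: "p 1 = 0" and p'1: "p' 1 = 0"
  shows "((\<lambda>t. if t \<le> 1 then p t else 0) has_real_derivative (if t \<le> 1 then p' t else 0)) (at t)"
proof -
  have c1: "closure {..1::real} = {..1}" by simp
  have c2: "closure {(1::real)<..} = {1..}" by simp
  have A: "((\<lambda>x. if x \<in> {..1} then p x else 0) has_derivative
      (if t \<in> {..1} then (\<lambda>h. h * p' t) else (\<lambda>h. h * 0))) (at t within ({..1} \<union> {1<..}))"
  proof (rule has_derivative_If_within_closures[where f = p and g = "\<lambda>_. 0" and S = "{..1}" and T = "{1<..}" and f' = "\<lambda>x h. h * p' x" and g' = "\<lambda>x h. h * 0"])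
    fix x
    show "(p has_derivative (\<lambda>h. h * p' x)) (at x within {..1} \<union> (closure {..1} \<inter> closure {1<..}))"
    proof (rule has_derivative_at_withinI)
      show "(p has_derivative (\<lambda>h. h * p' x)) (at x)"
        using d[of x] unfolding has_field_derivative_def
        by (rule has_derivative_eq_rhs) (rule ext, rule mult.commute)
    qed
    have "((\<lambda>x. 0::real) has_derivative (\<lambda>h. 0)) (at x within {1<..} \<union> (closure {..1} \<inter> closure {1<..}))"
      by (rule has_derivative_const)
    thus "((\<lambda>x. 0) has_derivative (\<lambda>h. h * 0)) (at x within {1<..} \<union> (closure {..1} \<inter> closure {1<..}))"
      by simp
    show "x \<in> closure {..1} \<Longrightarrow> x \<in> closure {1<..} \<Longrightarrow> p x = 0" unfolding c1 c2 using p1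
    proof -
      assume "x \<in> {..1}" "x \<in> {1..}" hence "x = 1" by simp
      thus ?thesis using p1 by simp
    qed
    show "x \<in> closure {..1} \<Longrightarrow> x \<in> closure {1<..} \<Longrightarrow> (\<lambda>h. h * p' x) = (\<lambda>h. h * 0)" unfolding c1 c2
    proof -
      assume "x \<in> {..1}" "x \<in> {1..}" hence "x = 1" by simp
      thus ?thesis using p'1 by simp
    qed
  next
    show "t \<in> {..1} \<union> {1<..}" by auto
  qed
  have U: "{..1} \<union> {1<..} = (UNIV::real set)" by auto
  have e1: "(\<lambda>x. if x \<in> {..1} then p x else 0) = (\<lambda>t. if t \<le> 1 then p t else 0)" by auto
  have e2: "(if t \<in> {..1} then (\<lambda>h. h * p' t) else (\<lambda>h. h * 0)) = (*) (if t \<le> 1 then p' t else 0)"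
    by (auto simp: fun_eq_iff)
  show ?thesis using A unfolding has_field_derivative_def U e1 e2 .
qed

definition w0 :: "real \<Rightarrow> real" where "w0 t = (if t \<le> 1 then (1 - t)^3 * (1 + 3*t) else 0)"
definition w1 :: "real \<Rightarrow> real" where "w1 t = (if t \<le> 1 then -12 * t * (1 - t)^2 else 0)"
definition w2 :: "real \<Rightarrow> real" where "w2 t = (if t \<le> 1 then -12 * (1 - t) * (1 - 3*t) else 0)"

lemma w0_deriv: "(w0 has_real_derivative w1 t) (at t)"
  unfolding w0_def w1_def
proof (rule pw)
  show "((\<lambda>t. (1 - t) ^ 3 * (1 + 3 * t)) has_real_derivative -12 * t * (1 - t)^2) (at t)" for t
    by (rule derivative_eq_intros refl | simp)+ (simp add: power2_eq_square power3_eq_cube algebra_simps)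
qed auto

lemma w1_deriv: "(w1 has_real_derivative w2 t) (at t)"
  unfolding w1_def w2_def
proof (rule pw)
  show "((\<lambda>t. -12 * t * (1 - t)^2) has_real_derivative -12 * (1 - t) * (1 - 3*t)) (at t)" for t
    by (rule derivative_eq_intros refl | simp)+ (simp add: power2_eq_square power3_eq_cube algebra_simps)
qed auto

lemma w2_cont: "continuous_on UNIV w2"
  unfolding w2_def
  by (rule continuous_on_cases_le[where h = "\<lambda>t. t"]; (intro continuous_intros)?; simp)

lemma w0_vals: "w0 0 = 1" "w1 0 = 0" "\<And>t. t \<ge> 1 \<Longrightarrow> w0 t = 0" "\<And>t. 0 \<le> t \<Longrightarrow> 0 \<le> w0 t" "\<And>t. 0 \<le> t \<Longrightarrow> w0 t \<le> 1"
proof -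
  show "w0 0 = 1" "w1 0 = 0" by (auto simp: w0_def w1_def)
  show "t \<ge> 1 \<Longrightarrow> w0 t = 0" for t by (auto simp: w0_def)
  show "0 \<le> t \<Longrightarrow> 0 \<le> w0 t" for t
  proof -
    assume t: "0 \<le> t"
    have "t \<le> 1 \<Longrightarrow> 0 \<le> (1 - t)^3 * (1 + 3*t)"
      by (rule mult_nonneg_nonneg) (simp_all add: t)
    thus ?thesis by (simp add: w0_def)
  qed
  show "0 \<le> t \<Longrightarrow> w0 t \<le> 1" for t
  proof (cases "t \<le> 1")
    case True
    assume t: "0 \<le> t"
    have "(1 - t)^3 * (1 + 3*t) \<le> 1"
    proof -
      have "(1 - t)^3 * (1 + 3*t) = 1 - 6*t^2 + 8*t^3 - 3*t^4" by (simp add: power2_eq_square power3_eq_cube power4_eq_xxxx algebra_simps)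
      also have "\<dots> = 1 - t^2 * (6 - 8*t + 3*t^2)" by (simp add: power2_eq_square power3_eq_cube power4_eq_xxxx algebra_simps)
      also have "\<dots> \<le> 1"
      proof -
        have "6 - 8*t + 3*t^2 = 3*(t - 4/3)^2 + 2/3" by (simp add: power2_eq_square algebra_simps)
        moreover have "0 \<le> (t - 4/3)^2" by simp
        ultimately have "6 - 8*t + 3*t^2 \<ge> 0" by linarith
        thus ?thesis by simp
      qed
      finally show ?thesis .
    qed
    thus ?thesis using True by (simp add: w0_def)
  next
    case False thus ?thesis by (simp add: w0_def)
  qed
qed

lemma outer_zero[simp]: "outer 0 a = 0" "outer a 0 = 0"
  by (auto simp: outer_def vec_eq_iff)

lemma testfn:
  fixes \<phi> U :: "'n::finite pt \<Rightarrow> real"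
  assumes \<phi>: "C2_nbhd C \<phi>" and C: "closed C" and x: "x \<in> C"
    and lm: "loc_max_rel C (\<lambda>y. U y - \<phi> y) x"
    and Ub: "\<forall>y\<in>C. \<bar>U y\<bar> \<le> B"
  shows "\<exists>\<psi>. C2_nbhd C \<psi> \<and> bdd_on C \<psi> \<and> \<psi> x = U x \<and> grad \<psi> x = grad \<phi> x \<and> hess \<psi> x = hess \<phi> x
      \<and> (\<forall>y\<in>C. U y - \<psi> y \<le> - min ((norm (y - x))^4) 1) \<and> continuous_on C \<psi>
      \<and> (\<exists>\<rho>>0. \<forall>y\<in>C. dist y x \<ge> \<rho> \<longrightarrow> \<psi> y \<ge> B + 1)"
proof -
  obtain U0 where U0: "open U0" "C \<subseteq> U0" "C2w U0 \<phi> (grad \<phi>) (hess \<phi>)"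
    using C2_nbhd_C2w[OF \<phi>] by blast
  obtain e where e: "e > 0" "\<forall>y\<in>C \<inter> ball x e. U y - \<phi> y \<le> U x - \<phi> x"
    using lm unfolding loc_max_rel_def by blast
  define \<rho> where "\<rho> = e / 2"
  have \<rho>: "\<rho> > 0" "\<rho> < e" using e by (auto simp: \<rho>_def)
  define c where "c = U x - \<phi> x"
  define c2 where "c2 = 1 / \<rho>^2"
  have c2: "c2 > 0" using \<rho> by (simp add: c2_def)
  note Cp = C2w_sq[of U0 x]
  note Cphi0 = C2w_add[OF U0(3) C2w_const[of U0 c]]
  note Cq = C2w_mult[OF Cp Cp]
  note Cs = C2w_mult[OF C2w_const[of U0 c2] Cp]
  note Cchi = C2w_comp[OF Cs w0_deriv w1_deriv w2_cont]
  have cont0: "continuous_on U0 (\<lambda>y. \<phi> y + c + ((y - x) \<bullet> (y - x)) * ((y - x) \<bullet> (y - x)))"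
    using C2w_contf[OF C2w_add[OF Cphi0 Cq]] .
  have sub: "C \<inter> cball x \<rho> \<subseteq> U0" using U0 by auto
  have "compact (C \<inter> cball x \<rho>)" using C by (simp add: compact_Int_closed closed_Int_compact)
  from compact_continuous_image[OF continuous_on_subset[OF cont0 sub] this]
  have "compact ((\<lambda>y. \<phi> y + c + ((y - x) \<bullet> (y - x)) * ((y - x) \<bullet> (y - x))) ` (C \<inter> cball x \<rho>))"
    .
  then obtain A where A: "\<forall>y\<in>C \<inter> cball x \<rho>. \<bar>\<phi> y + c + ((y - x) \<bullet> (y - x)) * ((y - x) \<bullet> (y - x))\<bar> \<le> A"
    using compact_imp_bounded bounded_iff by (metis (no_types, lifting) image_eqI real_norm_def)
  define K where "K = max A (B + 2)"
  note Cpsi = C2w_add[OF C2w_const[of U0 K] C2w_mult[OF Cchi C2w_add[OF C2w_add[OF Cphi0 Cq] C2w_const[of U0 "-K"]]]]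
  define \<psi> where "\<psi> = (\<lambda>y. K + w0 (c2 * ((y - x) \<bullet> (y - x))) * (\<phi> y + c + ((y - x) \<bullet> (y - x)) * ((y - x) \<bullet> (y - x)) + - K))"
  have "C2_nbhd C \<psi>" unfolding \<psi>_def by (rule C2w_C2_nbhd[OF Cpsi U0(1,2)])
  have gx: "grad \<psi> x = grad \<phi> x"
    unfolding \<psi>_def C2w_grad[OF Cpsi U0(2)[THEN subsetD, OF x]] by (simp add: w0_vals)
  have hx: "hess \<psi> x = hess \<phi> x"
    unfolding \<psi>_def C2w_hess[OF Cpsi U0(2)[THEN subsetD, OF x] U0(1)] by (simp add: w0_vals)
  have pn: "(y - x) \<bullet> (y - x) = (norm (y - x))^2" for y by (simp add: power2_norm_eq_inner)
  have KA: "K \<ge> A" "K \<ge> B + 2" by (auto simp: K_def)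
  have far: "\<psi> y = K" if "dist y x \<ge> \<rho>" for y
  proof -
    have "\<rho>^2 \<le> (norm (y - x))^2" using that \<rho> by (simp add: dist_norm power_mono)
    hence "1 \<le> c2 * ((y - x) \<bullet> (y - x))" using \<rho> by (simp add: pn c2_def field_simps)
    thus ?thesis by (simp add: \<psi>_def w0_vals)
  qed
  have near: "\<psi> y \<ge> \<phi> y + c + (norm (y - x))^4 \<and> \<bar>\<psi> y\<bar> \<le> 2 * K + A" if y: "y \<in> C" "dist y x < \<rho>" for y
  proof -
    define t where "t = w0 (c2 * ((y - x) \<bullet> (y - x)))"
    have t: "0 \<le> t" "t \<le> 1" unfolding t_def using c2 by (auto intro!: w0_vals)
    define a where "a = \<phi> y + c + ((y - x) \<bullet> (y - x)) * ((y - x) \<bullet> (y - x))"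
    have a: "\<bar>a\<bar> \<le> A" unfolding a_def using A y by (auto simp: dist_commute)
    have ps: "\<psi> y = K + t * (a - K)" by (simp add: \<psi>_def t_def a_def)
    have "a \<le> K + t * (a - K)"
    proof -
      have "(1 - t) * (K - a) \<ge> 0" using t a KA by (intro mult_nonneg_nonneg) auto
      thus ?thesis by (simp add: algebra_simps)
    qed
    moreover have "\<bar>K + t * (a - K)\<bar> \<le> 2 * K + A"
    proof -
      have "\<bar>t * (a - K)\<bar> \<le> 1 * \<bar>a - K\<bar>" unfolding abs_mult using t by (intro mult_right_mono) auto
      moreover have K0: "K \<ge> 0" using KA a by linarith
      moreover have "\<bar>a - K\<bar> \<le> \<bar>a\<bar> + \<bar>K\<bar>" by (rule abs_triangle_ineq4)
      ultimately have "\<bar>t * (a - K)\<bar> \<le> A + K" using a by simp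
      hence "- (A + K) \<le> t * (a - K) \<and> t * (a - K) \<le> A + K" by (simp add: abs_le_iff)
      thus ?thesis using K0 by (simp add: abs_le_iff)
    qed
    moreover have "a = \<phi> y + c + (norm (y - x))^4" by (simp add: a_def pn power4_eq_xxxx power2_eq_square)
    ultimately show ?thesis using ps by simp
  qed
  have px: "\<psi> x = U x" by (simp add: \<psi>_def w0_vals c_def)
  have est: "U y - \<psi> y \<le> - min ((norm (y - x))^4) 1" if y: "y \<in> C" for y
  proof (cases "dist y x < \<rho>")
    case True
    have "U y - \<phi> y \<le> c" using e(2) y True \<rho> by (auto simp: c_def dist_commute)
    thus ?thesis using near[OF y True] by linarith
  next
    case False thus ?thesis using far[of y] Ub y KA by fastforce
  qed
  have bdd: "bdd_on C \<psi>" unfolding bdd_on_def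
  proof (intro exI[of _ "2 * K + A"] ballI)
    fix y assume y: "y \<in> C"
    have "\<bar>\<phi> x + c + (x - x) \<bullet> (x - x) * ((x - x) \<bullet> (x - x))\<bar> \<le> A" using A x \<rho> by (intro A[rule_format]) auto
    hence A0: "A \<ge> 0" by linarith
    hence "K \<ge> 0" using KA by linarith
    note A0 this
    thus "\<bar>\<psi> y\<bar> \<le> 2 * K + A"
      using near[OF y] far[of y] by (cases "dist y x < \<rho>") auto
  qed
  have cont: "continuous_on C \<psi>" unfolding \<psi>_def by (rule continuous_on_subset[OF C2w_contf[OF Cpsi] U0(2)])
  show ?thesis
    using \<open>C2_nbhd C \<psi>\<close> bdd px gx hx est cont far KA \<rho> by (intro exI[of _ \<psi>]) auto
qed

lemma nhds_princ_nb: "x \<in> C \<Longrightarrow> inf (nhds x) (principal C) \<noteq> bot"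
proof
  assume x: "x \<in> C" and b: "inf (nhds x) (principal C) = bot"
  have "eventually (\<lambda>_. False) (inf (nhds x) (principal C))" using b by simp
  hence "eventually (\<lambda>y. y \<in> C \<longrightarrow> False) (nhds x)" by (simp add: eventually_inf_principal)
  thus False using x eventually_nhds_x_imp_x by fastforce
qed

lemma F_nb: "x \<in> C \<Longrightarrow> at_right (0::real) \<times>\<^sub>F inf (nhds x) (principal C) \<noteq> bot"
  using nhds_princ_nb by (simp add: prod_filter_eq_bot)

lemma ev_princ: "eventually (\<lambda>y. y \<in> C) (inf (nhds x) (principal C))"
  by (simp add: eventually_inf_principal)

lemma ev_F: "eventually (\<lambda>p. 0 < fst p \<and> snd p \<in> C) (at_right (0::real) \<times>\<^sub>F inf (nhds x) (principal C))"
  by (rule eventually_prodI[OF eventually_at_right_less ev_princ])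

lemma hr_bounds:
  assumes B: "\<forall>h>0. \<forall>y\<in>C. \<bar>u h y\<bar> \<le> B" and x: "x \<in> C"
  shows "hr_limsup C u x \<le> ereal B" "ereal (-B) \<le> hr_limsup C u x"
    "hr_liminf C u x \<le> ereal B" "ereal (-B) \<le> hr_liminf C u x"
proof -
  have ev0: "eventually (\<lambda>p. \<bar>u (fst p) (snd p)\<bar> \<le> B) (at_right (0::real) \<times>\<^sub>F inf (nhds x) (principal C))"
    by (rule eventually_mono[OF ev_F]) (use B in auto)
  have ev: "eventually (\<lambda>p. ereal (-B) \<le> (\<lambda>(h, y). ereal (u h y)) p \<and> (\<lambda>(h, y). ereal (u h y)) p \<le> ereal B)
      (at_right (0::real) \<times>\<^sub>F inf (nhds x) (principal C))"
    by (rule eventually_mono[OF ev0]) (auto simp: abs_le_iff split: prod.splits)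
  show "hr_limsup C u x \<le> ereal B" unfolding hr_limsup_def
    by (rule Limsup_bounded) (rule eventually_mono[OF ev], auto)
  show "ereal (-B) \<le> hr_limsup C u x" unfolding hr_limsup_def
    by (rule le_Limsup[OF F_nb[OF x]]) (rule eventually_mono[OF ev], auto)
  show "hr_liminf C u x \<le> ereal B" unfolding hr_liminf_def
    by (rule Liminf_le[OF F_nb[OF x]]) (rule eventually_mono[OF ev], auto)
  show "ereal (-B) \<le> hr_liminf C u x" unfolding hr_liminf_def
    by (rule Liminf_bounded) (rule eventually_mono[OF ev], auto)
qed

lemma hr_real:
  assumes B: "\<forall>h>0. \<forall>y\<in>C. \<bar>u h y\<bar> \<le> B" and x: "x \<in> C"
  shows "hr_limsup C u x = ereal (real_of_ereal (hr_limsup C u x))"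
    "\<bar>real_of_ereal (hr_limsup C u x)\<bar> \<le> B"
    "hr_liminf C u x = ereal (real_of_ereal (hr_liminf C u x))"
    "\<bar>real_of_ereal (hr_liminf C u x)\<bar> \<le> B"
proof -
  have a: "ereal (-B) \<le> X \<Longrightarrow> X \<le> ereal B \<Longrightarrow> X = ereal (real_of_ereal X) \<and> \<bar>real_of_ereal X\<bar> \<le> B" for X
    by (cases X) auto
  show "hr_limsup C u x = ereal (real_of_ereal (hr_limsup C u x))"
    "\<bar>real_of_ereal (hr_limsup C u x)\<bar> \<le> B"
    "hr_liminf C u x = ereal (real_of_ereal (hr_liminf C u x))"
    "\<bar>real_of_ereal (hr_liminf C u x)\<bar> \<le> B"
    using a[OF hr_bounds(2,1)[OF B x]] a[OF hr_bounds(4,3)[OF B x]] by auto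
qed

lemma hr_neg: "hr_limsup C (\<lambda>h y. - u h y) x = - hr_liminf C u x"
proof -
  have "(\<lambda>(h, y). ereal (- u h y)) = (\<lambda>p. - (\<lambda>(h, y). ereal (u h y)) p)" by auto
  thus ?thesis unfolding hr_limsup_def hr_liminf_def by (simp add: ereal_Limsup_uminus)
qed

lemma K1:
  assumes "hr_limsup C u z < ereal a"
  shows "\<exists>S. open S \<and> z \<in> S \<and> eventually (\<lambda>h. \<forall>y\<in>S \<inter> C. u h y < a) (at_right 0)"
proof -
  have "eventually (\<lambda>p. (\<lambda>(h, y). ereal (u h y)) p < ereal a) (at_right (0::real) \<times>\<^sub>F inf (nhds z) (principal C))"
    using Limsup_lessD[OF assms[unfolded hr_limsup_def]] .
  then obtain Pf Pg where P: "eventually Pf (at_right 0)" "eventually Pg (inf (nhds z) (principal C))"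
    "\<forall>h y. Pf h \<longrightarrow> Pg y \<longrightarrow> u h y < a"
    unfolding eventually_prod_filter by auto
  obtain S where S: "open S" "z \<in> S" "\<forall>y\<in>S. y \<in> C \<longrightarrow> Pg y"
    using P(2) unfolding eventually_inf_principal eventually_nhds by blast
  have "eventually (\<lambda>h. \<forall>y\<in>S \<inter> C. u h y < a) (at_right 0)"
    by (rule eventually_mono[OF P(1)]) (use S P(3) in blast)
  thus ?thesis using S by blast
qed

lemma K4:
  assumes Kc: "compact Kc" "Kc \<subseteq> C"
    and B: "\<forall>h>0. \<forall>y\<in>C. \<bar>u h y\<bar> \<le> B"
    and cont: "\<forall>z\<in>Kc. \<forall>d>0. eventually (\<lambda>y. \<psi> y > \<psi> z - d) (inf (nhds z) (principal C))"
    and less: "\<forall>z\<in>Kc. hr_limsup C u z < ereal (\<psi> z + c)"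
  shows "eventually (\<lambda>h. \<forall>y\<in>Kc. u h y - \<psi> y < c) (at_right 0)"
proof -
  have loc: "\<exists>T. open T \<and> z \<in> T \<and> eventually (\<lambda>h. \<forall>y\<in>T \<inter> C. u h y - \<psi> y < c) (at_right 0)"
    if z: "z \<in> Kc" for z
  proof -
    define v where "v = real_of_ereal (hr_limsup C u z)"
    have zC: "z \<in> C" using z Kc by auto
    have v: "hr_limsup C u z = ereal v" using hr_real(1)[OF B zC] by (simp add: v_def)
    define d where "d = (\<psi> z + c - v) / 2"
    have "ereal v < ereal (\<psi> z + c)" using less z v by metis
    hence d: "d > 0" by (simp add: d_def)
    have "hr_limsup C u z < ereal (\<psi> z + c - d)" using v d by (simp add: d_def field_simps)
    from K1[OF this] obtain S where S: "open S" "z \<in> S"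
      "eventually (\<lambda>h. \<forall>y\<in>S \<inter> C. u h y < \<psi> z + c - d) (at_right 0)" by blast
    obtain S' where S': "open S'" "z \<in> S'" "\<forall>y\<in>S'. y \<in> C \<longrightarrow> \<psi> y > \<psi> z - d"
      using cont z d unfolding eventually_inf_principal eventually_nhds by blast
    have "eventually (\<lambda>h. \<forall>y\<in>(S \<inter> S') \<inter> C. u h y - \<psi> y < c) (at_right 0)"
    proof (rule eventually_mono[OF S(3)], intro ballI)
      fix h y assume H: "\<forall>y\<in>S \<inter> C. u h y < \<psi> z + c - d" and y: "y \<in> (S \<inter> S') \<inter> C"
      have "u h y < \<psi> z + c - d" using H y by auto
      moreover have "\<psi> y > \<psi> z - d" using S' y by auto
      ultimately show "u h y - \<psi> y < c" by linarith
    qed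
    thus ?thesis using S S' by (intro exI[of _ "S \<inter> S'"]) auto
  qed
  hence "\<forall>z\<in>Kc. \<exists>T. open T \<and> z \<in> T \<and> eventually (\<lambda>h. \<forall>y\<in>T \<inter> C. u h y - \<psi> y < c) (at_right 0)"
    by blast
  then obtain T where T0: "\<forall>z\<in>Kc. open (T z) \<and> z \<in> T z \<and> eventually (\<lambda>h. \<forall>y\<in>T z \<inter> C. u h y - \<psi> y < c) (at_right 0)"
    by (rule bchoice[elim_format]) blast
  hence T: "\<And>z. z \<in> Kc \<Longrightarrow> open (T z) \<and> z \<in> T z \<and> eventually (\<lambda>h. \<forall>y\<in>T z \<inter> C. u h y - \<psi> y < c) (at_right 0)"
    by blast
  obtain Fs where Fs: "Fs \<subseteq> Kc" "finite Fs" "Kc \<subseteq> (\<Union>z\<in>Fs. T z)"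
    using compactE_image[OF Kc(1), of Kc T] T by blast
  have "eventually (\<lambda>h. \<forall>z\<in>Fs. \<forall>y\<in>T z \<inter> C. u h y - \<psi> y < c) (at_right 0)"
    using Fs T by (intro eventually_ball_finite) auto
  thus ?thesis by (rule eventually_mono) (use Fs Kc in blast)
qed

lemma cont_ev:
  fixes \<psi> :: "'a::metric_space \<Rightarrow> real"
  assumes "continuous_on C \<psi>" "z \<in> C" "d > 0"
  shows "eventually (\<lambda>y. \<bar>\<psi> y - \<psi> z\<bar> < d) (inf (nhds z) (principal C))"
proof -
  obtain e where e: "e > 0" "\<forall>y\<in>C. dist y z < e \<longrightarrow> dist (\<psi> y) (\<psi> z) < d"
    using assms unfolding continuous_on_iff by blast
  show ?thesis unfolding eventually_inf_principal eventually_nhds_metric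
    using e by (auto simp: dist_real_def)
qed

lemma exp_small: "0 < h \<Longrightarrow> exp (- 1 / h) \<le> (h::real)"
proof -
  assume h: "0 < h"
  have "1 + 1/h \<le> exp (1/h)" by (rule exp_ge_add_one_self)
  hence "1/h \<le> exp (1/h)" by linarith
  hence "inverse (exp (1/h)) \<le> inverse (1/h)" using h by (intro le_imp_inverse_le) auto
  thus ?thesis using h by (simp add: exp_minus)
qed

lemma less_Limsup_freq:
  fixes f :: "'a \<Rightarrow> ereal"
  assumes "a < Limsup F f" shows "frequently (\<lambda>p. a < f p) F"
proof (rule ccontr)
  assume "\<not> frequently (\<lambda>p. a < f p) F"
  hence "eventually (\<lambda>p. f p \<le> a) F" by (simp add: not_frequently not_less)
  hence "Limsup F f \<le> a" by (rule Limsup_bounded)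
  thus False using assms by simp
qed

lemma coreA:
  fixes u :: "real \<Rightarrow> 'n::finite pt \<Rightarrow> real"
  assumes C: "closed C" and x: "x \<in> C"
    and B: "\<forall>h>0. \<forall>y\<in>C. \<bar>u h y\<bar> \<le> B"
    and \<psi>c: "continuous_on C \<psi>"
    and \<psi>x: "hr_limsup C u x = ereal (\<psi> x)"
    and est: "\<forall>z\<in>C. hr_limsup C u z \<le> ereal (\<psi> z - min ((norm (z - x))^4) 1)"
    and \<rho>: "\<rho> > 0" and far: "\<forall>y\<in>C. dist y x \<ge> \<rho> \<longrightarrow> \<psi> y \<ge> B + 1"
    and \<eta>: "\<eta> > 0" and h0: "h0 > 0"
  shows "\<exists>h y \<xi>. 0 < h \<and> h < h0 \<and> y \<in> C \<and> dist y x < \<eta> \<and> \<bar>\<xi>\<bar> < \<eta> \<and> (\<forall>z\<in>C. u h z \<le> \<psi> z + \<xi>)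
          \<and> u h y = \<psi> y + \<xi> - exp (- 1 / h)"
proof -
  define \<delta> where "\<delta> = \<eta> / 2"
  define m where "m = min (\<delta>^4) 1"
  define \<epsilon> where "\<epsilon> = min (m / 8) (\<eta> / 4)"
  have \<delta>: "\<delta> > 0" "\<delta> < \<eta>" using \<eta> by (auto simp: \<delta>_def)
  have m: "m > 0" "m \<le> 1" using \<delta> by (auto simp: m_def)
  have \<epsilon>: "\<epsilon> > 0" "\<epsilon> \<le> m / 8" "\<epsilon> \<le> \<eta> / 4" using m \<eta> by (auto simp: \<epsilon>_def)
  have contK: "\<forall>z\<in>K. \<forall>d>0. eventually (\<lambda>y. \<psi> y > \<psi> z - d) (inf (nhds z) (principal C))" if "K \<subseteq> C" for K
  proof (intro ballI allI impI)
    fix z d assume z: "z \<in> K" and d: "(d::real) > 0"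
    have zC: "z \<in> C" using z that by auto
    show "eventually (\<lambda>y. \<psi> y > \<psi> z - d) (inf (nhds z) (principal C))"
      by (rule eventually_mono[OF cont_ev[OF \<psi>c zC d]]) (auto simp: abs_less_iff)
  qed
  define K1 where "K1 = (C \<inter> cball x \<rho>) - ball x \<delta>"
  define K2 where "K2 = C \<inter> cball x \<rho>"
  have K2c: "compact K2" unfolding K2_def using C by (simp add: closed_Int_compact)
  have K1c: "compact K1" unfolding K1_def using K2c[unfolded K2_def] by (intro compact_diff) auto
  have E1: "eventually (\<lambda>h. \<forall>y\<in>K1. u h y - \<psi> y < - (m/2)) (at_right 0)"
  proof (rule K4[OF K1c _ B contK])
    show "K1 \<subseteq> C" "K1 \<subseteq> C" by (auto simp: K1_def)
    show "\<forall>z\<in>K1. hr_limsup C u z < ereal (\<psi> z + - (m / 2))"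
    proof
      fix z assume z: "z \<in> K1"
      have "\<delta> \<le> norm (z - x)" using z by (auto simp: K1_def dist_norm norm_minus_commute)
      hence "\<delta>^4 \<le> (norm (z - x))^4" using \<delta> by (intro power_mono) auto
      hence "m \<le> min ((norm (z - x))^4) 1" by (auto simp: m_def)
      moreover have "hr_limsup C u z \<le> ereal (\<psi> z - min ((norm (z - x))^4) 1)" using est z by (auto simp: K1_def)
      ultimately have "\<psi> z - min ((norm (z - x))^4) 1 < \<psi> z + - (m / 2)" using m by linarith
      hence "ereal (\<psi> z - min ((norm (z - x))^4) 1) < ereal (\<psi> z + - (m / 2))" by simp
      thus "hr_limsup C u z < ereal (\<psi> z + - (m / 2))"
        using \<open>hr_limsup C u z \<le> _\<close> by (rule le_less_trans[rotated])
    qed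
  qed
  have E2: "eventually (\<lambda>h. \<forall>y\<in>K2. u h y - \<psi> y < \<epsilon>) (at_right 0)"
  proof (rule K4[OF K2c _ B contK])
    show "K2 \<subseteq> C" "K2 \<subseteq> C" by (auto simp: K2_def)
    show "\<forall>z\<in>K2. hr_limsup C u z < ereal (\<psi> z + \<epsilon>)"
    proof
      fix z assume z: "z \<in> K2"
      have "0 \<le> min ((norm (z - x))^4) 1" by simp
      moreover have "hr_limsup C u z \<le> ereal (\<psi> z - min ((norm (z - x))^4) 1)" using est z by (auto simp: K2_def)
      ultimately have "\<psi> z - min ((norm (z - x))^4) 1 < \<psi> z + \<epsilon>" using \<epsilon> by linarith
      hence "ereal (\<psi> z - min ((norm (z - x))^4) 1) < ereal (\<psi> z + \<epsilon>)" by simp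
      thus "hr_limsup C u z < ereal (\<psi> z + \<epsilon>)"
        using \<open>hr_limsup C u z \<le> _\<close> by (rule le_less_trans[rotated])
    qed
  qed
  have E3: "eventually (\<lambda>h. 0 < h \<and> h < h0 \<and> h < \<epsilon>) (at_right 0)"
    using eventually_at_right_real[of 0 "min h0 \<epsilon>"] h0 \<epsilon> by (auto elim!: eventually_mono)
  define E where "E = (\<lambda>h. (\<forall>y\<in>K1. u h y - \<psi> y < - (m/2)) \<and> (\<forall>y\<in>K2. u h y - \<psi> y < \<epsilon>) \<and> 0 < h \<and> h < h0 \<and> h < \<epsilon>)"
  have EE: "eventually E (at_right 0)" unfolding E_def
    by (rule eventually_mono[OF eventually_conj[OF E1 eventually_conj[OF E2 E3]]]) auto
  have ev2: "eventually (\<lambda>y. y \<in> C \<and> \<bar>\<psi> y - \<psi> x\<bar> < \<epsilon>) (inf (nhds x) (principal C))"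
    by (rule eventually_conj[OF ev_princ cont_ev[OF \<psi>c x \<epsilon>(1)]])
  have fr: "frequently (\<lambda>p. ereal (\<psi> x - \<epsilon>) < (\<lambda>(h, y). ereal (u h y)) p) (at_right (0::real) \<times>\<^sub>F inf (nhds x) (principal C))"
    by (rule less_Limsup_freq) (use \<psi>x \<epsilon> in \<open>simp add: hr_limsup_def[symmetric]\<close>)
  have "frequently (\<lambda>p. ereal (\<psi> x - \<epsilon>) < (\<lambda>(h, y). ereal (u h y)) p \<and> E (fst p) \<and> snd p \<in> C \<and> \<bar>\<psi> (snd p) - \<psi> x\<bar> < \<epsilon>)
     (at_right (0::real) \<times>\<^sub>F inf (nhds x) (principal C))"
    by (rule frequently_rev_mp[OF fr], rule eventually_mono[OF eventually_prodI[OF EE ev2]]) auto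
  then obtain h y0 where hy0: "\<psi> x - \<epsilon> < u h y0" "E h" "y0 \<in> C" "\<bar>\<psi> y0 - \<psi> x\<bar> < \<epsilon>"
    by (auto dest!: frequently_ex)
  have Eh: "\<forall>y\<in>K1. u h y - \<psi> y < - (m/2)" "\<forall>y\<in>K2. u h y - \<psi> y < \<epsilon>" "0 < h" "h < h0" "h < \<epsilon>"
    using hy0(2) by (auto simp: E_def)
  have farv: "u h z - \<psi> z \<le> -1" if "z \<in> C" "z \<notin> cball x \<rho>" for z
  proof -
    have "\<psi> z \<ge> B + 1" using far that by (auto simp: dist_commute)
    moreover have "u h z \<le> B" using B Eh(3) that by (auto simp: abs_le_iff)
    ultimately show ?thesis by linarith
  qed
  have allv: "u h z - \<psi> z < \<epsilon>" if z: "z \<in> C" for z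
  proof (cases "z \<in> cball x \<rho>")
    case True thus ?thesis using Eh(2) z by (auto simp: K2_def)
  next
    case False thus ?thesis using farv[OF z] \<epsilon> by linarith
  qed
  define M where "M = (SUP z\<in>C. u h z - \<psi> z)"
  have Cne: "C \<noteq> {}" using x by auto
  have bdd: "bdd_above ((\<lambda>z. u h z - \<psi> z) ` C)"
    using allv by (intro bdd_aboveI[of _ \<epsilon>]) (auto intro: less_imp_le)
  have M1: "u h y0 - \<psi> y0 \<le> M" unfolding M_def by (rule cSUP_upper[OF hy0(3) bdd])
  have M2: "M \<le> \<epsilon>" unfolding M_def by (rule cSUP_least[OF Cne]) (use allv in \<open>auto intro: less_imp_le\<close>)
  have ex0: "exp (- 1 / h) > 0" by simp
  have "M - exp (- 1 / h) < M" using ex0 by linarith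
  then obtain y where y: "y \<in> C" "M - exp (- 1 / h) < u h y - \<psi> y"
    unfolding M_def using less_cSUP_iff[OF Cne bdd] by blast
  define \<xi> where "\<xi> = u h y - \<psi> y + exp (- 1 / h)"
  have exh: "exp (- 1 / h) \<le> h" using exp_small[OF Eh(3)] .
  have Mlow: "M > - 2 * \<epsilon>" using M1 hy0(1,4) by linarith
  have yv: "u h y - \<psi> y > - 3 * \<epsilon>" using y(2) Mlow exh Eh(5) by linarith
  have "m / 2 > 3 * \<epsilon>" using \<epsilon> m by linarith
  hence yv2: "u h y - \<psi> y > - (m / 2)" using yv by linarith
  have yin: "y \<in> cball x \<rho>"
  proof (rule ccontr)
    assume "y \<notin> cball x \<rho>"
    hence "u h y - \<psi> y \<le> -1" using farv y(1) by blast
    thus False using yv2 m by linarith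
  qed
  have "y \<notin> K1" using yv2 Eh(1) by fastforce
  hence dy: "dist y x < \<eta>" using yin y(1) \<delta> by (auto simp: K1_def dist_commute)
  have \<xi>1: "\<bar>\<xi>\<bar> < \<eta>"
  proof -
    have "\<xi> > M" using y(2) by (simp add: \<xi>_def)
    moreover have "\<xi> \<le> M + exp (- 1 / h)"
      using cSUP_upper[OF y(1) bdd] by (simp add: \<xi>_def M_def)
    ultimately show ?thesis using Mlow M2 exh Eh(5) \<epsilon> by (simp add: abs_less_iff)
  qed
  have \<xi>2: "\<forall>z\<in>C. u h z \<le> \<psi> z + \<xi>"
  proof
    fix z assume z: "z \<in> C"
    have "u h z - \<psi> z \<le> M" unfolding M_def by (rule cSUP_upper[OF z bdd])
    thus "u h z \<le> \<psi> z + \<xi>" using y(2) by (simp add: \<xi>_def)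
  qed
  show ?thesis
    by (rule exI[of _ h], rule exI[of _ y], rule exI[of _ \<xi>])
       (use Eh y dy \<xi>1 \<xi>2 in \<open>auto simp: \<xi>_def\<close>)
qed

lemma usc_hr:
  assumes B: "\<forall>h>0. \<forall>y\<in>C. \<bar>u h y\<bar> \<le> B"
  shows "usc_on C (\<lambda>z. real_of_ereal (hr_limsup C u z))"
  unfolding usc_on_def usc_env_def
proof
  fix z assume z: "z \<in> C"
  define V where "V = (\<lambda>z. real_of_ereal (hr_limsup C u z))"
  have Vr: "\<And>y. y \<in> C \<Longrightarrow> hr_limsup C u y = ereal (V y)" using hr_real(1)[OF B] V_def by metis
  have "Limsup (inf (nhds z) (principal C)) (\<lambda>y. ereal (V y)) \<le> ereal (V z)"
  proof (rule ereal_le_epsilon)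
    fix e :: ereal assume e: "0 < e"
    show "Limsup (inf (nhds z) (principal C)) (\<lambda>y. ereal (V y)) \<le> ereal (V z) + e"
    proof (cases e)
      case (real r)
      with e have r: "r > 0" by simp
      have "hr_limsup C u z < ereal (V z + r)" using Vr[OF z] r by simp
      from K1[OF this] obtain S where S: "open S" "z \<in> S"
        "eventually (\<lambda>h. \<forall>y\<in>S \<inter> C. u h y < V z + r) (at_right 0)" by blast
      have "V y \<le> V z + r" if y: "y \<in> S" "y \<in> C" for y
      proof -
        have evS: "eventually (\<lambda>y'. y' \<in> S \<and> y' \<in> C) (inf (nhds y) (principal C))"
          unfolding eventually_inf_principal eventually_nhds using S y by blast
        have "hr_limsup C u y \<le> ereal (V z + r)" unfolding hr_limsup_def
          by (rule Limsup_bounded, rule eventually_mono[OF eventually_prodI[OF S(3) evS]]) (auto simp: less_imp_le)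
        thus ?thesis using Vr[OF y(2)] by simp
      qed
      hence "eventually (\<lambda>y. ereal (V y) \<le> ereal (V z + r)) (inf (nhds z) (principal C))"
        unfolding eventually_inf_principal eventually_nhds using S by auto
      hence "Limsup (inf (nhds z) (principal C)) (\<lambda>y. ereal (V y)) \<le> ereal (V z + r)"
        by (rule Limsup_bounded)
      thus ?thesis using real by simp
    qed (use e in auto)
  qed
  thus "Limsup (inf (nhds z) (principal C)) (\<lambda>y. ereal (real_of_ereal (hr_limsup C u y)))
    \<le> ereal (real_of_ereal (hr_limsup C u z))" by (simp add: V_def)
qed

lemma freq_Liminf:
  fixes s :: "'a \<Rightarrow> ereal"
  assumes "frequently (\<lambda>p. s p \<le> a) G" shows "Liminf G s \<le> a"
proof (rule ccontr)
  assume "\<not> Liminf G s \<le> a"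
  hence "eventually (\<lambda>p. s p > a) G" by (intro less_LiminfD) simp
  hence "\<not> frequently (\<lambda>p. s p \<le> a) G" by (simp add: not_frequently not_le)
  thus False using assms by simp
qed

lemma freq_Limsup:
  fixes s :: "'a \<Rightarrow> ereal"
  assumes "frequently (\<lambda>p. s p \<ge> a) G" shows "Limsup G s \<ge> a"
proof (rule ccontr)
  assume "\<not> Limsup G s \<ge> a"
  hence "eventually (\<lambda>p. s p < a) G" by (intro Limsup_lessD) simp
  hence "\<not> frequently (\<lambda>p. s p \<ge> a) G" by (simp add: not_frequently not_le)
  thus False using assms by simp
qed

lemma G_freq:
  fixes f :: "'n::finite pt \<Rightarrow> real \<Rightarrow> real" and Q :: "real \<Rightarrow> 'n pt \<Rightarrow> real \<Rightarrow> bool"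
  assumes flim: "((\<lambda>(y, h). f y h) \<longlongrightarrow> 0) (inf (nhds x) (principal C) \<times>\<^sub>F at_right 0)"
    and e: "e > 0"
    and core: "\<And>\<eta> h0. \<eta> > 0 \<Longrightarrow> h0 > 0 \<Longrightarrow> \<exists>h y \<xi>. 0 < h \<and> h < h0 \<and> y \<in> C \<and> dist y x < \<eta> \<and> \<bar>\<xi>\<bar> < \<eta> \<and> Q h y \<xi>"
    and impl: "\<And>h y \<xi>. 0 < h \<Longrightarrow> y \<in> C \<Longrightarrow> Q h y \<xi> \<Longrightarrow> f y h < e \<Longrightarrow> R (h, y, \<xi>)"
  shows "frequently R (at_right 0 \<times>\<^sub>F inf (nhds x) (principal C) \<times>\<^sub>F nhds 0)"
proof (rule ccontr)
  assume "\<not> frequently R (at_right 0 \<times>\<^sub>F inf (nhds x) (principal C) \<times>\<^sub>F nhds 0)"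
  hence ev: "eventually (\<lambda>p. \<not> R p) (at_right 0 \<times>\<^sub>F inf (nhds x) (principal C) \<times>\<^sub>F nhds 0)"
    by (simp add: not_frequently)
  then obtain Pf Pg where P: "eventually Pf (at_right 0)" "eventually Pg (inf (nhds x) (principal C) \<times>\<^sub>F nhds 0)"
    "\<forall>h q. Pf h \<longrightarrow> Pg q \<longrightarrow> \<not> R (h, q)"
    unfolding eventually_prod_filter by blast
  then obtain Pg1 Pg2 where P2: "eventually Pg1 (inf (nhds x) (principal C))" "eventually Pg2 (nhds 0)"
    "\<forall>y \<xi>. Pg1 y \<longrightarrow> Pg2 \<xi> \<longrightarrow> Pg (y, \<xi>)"
    unfolding eventually_prod_filter by blast
  have "eventually (\<lambda>p. (\<lambda>(y, h). f y h) p < e) (inf (nhds x) (principal C) \<times>\<^sub>F at_right 0)"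
    using order_tendstoD(2)[OF flim e] .
  then obtain Qf Qg where Q: "eventually Qf (inf (nhds x) (principal C))" "eventually Qg (at_right 0)"
    "\<forall>y h. Qf y \<longrightarrow> Qg h \<longrightarrow> f y h < e"
    unfolding eventually_prod_filter by auto
  obtain h1 where h1: "h1 > 0" "\<forall>h>0. h < h1 \<longrightarrow> Pf h \<and> Qg h"
    using eventually_conj[OF P(1) Q(2)] unfolding eventually_at_right_field by auto
  obtain S where S: "open S" "x \<in> S" "\<forall>y\<in>S. y \<in> C \<longrightarrow> Pg1 y \<and> Qf y"
    using eventually_conj[OF P2(1) Q(1)] unfolding eventually_inf_principal eventually_nhds by auto
  obtain r where r: "r > 0" "ball x r \<subseteq> S" using S open_contains_ball by blast
  obtain d where d: "d > 0" "\<forall>\<xi>. dist \<xi> 0 < d \<longrightarrow> Pg2 \<xi>"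
    using P2(2) unfolding eventually_nhds_metric by blast
  obtain h y \<xi> where hy: "0 < h" "h < h1" "y \<in> C" "dist y x < min r d" "\<bar>\<xi>\<bar> < min r d" "Q h y \<xi>"
    using core[of "min r d" h1] r d h1 by auto
  have yS: "y \<in> S" using hy(4) r by (auto simp: dist_commute)
  have "Pf h" "Qg h" using h1 hy by auto
  moreover have "Pg1 y" "Qf y" using S yS hy(3) by auto
  moreover have "Pg2 \<xi>" using d hy(5) by auto
  ultimately have "\<not> R (h, y, \<xi>)" "f y h < e" using P(3) P2(3) Q(3) by auto
  thus False using impl[OF hy(1) hy(3) hy(6)] by simp
qed

lemma bdd_on_add_const: "bdd_on A u \<Longrightarrow> bdd_on A (\<lambda>z. u z + c)"
proof -
  assume "bdd_on A u"
  then obtain M where M: "\<forall>x\<in>A. \<bar>u x\<bar> \<le> M" unfolding bdd_on_def by blast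
  show ?thesis unfolding bdd_on_def
  proof (intro exI[of _ "M + \<bar>c\<bar>"] ballI)
    fix z assume z: "z \<in> A"
    have "\<bar>u z + c\<bar> \<le> \<bar>u z\<bar> + \<bar>c\<bar>" by (rule abs_triangle_ineq)
    thus "\<bar>u z + c\<bar> \<le> M + \<bar>c\<bar>" using M z by fastforce
  qed
qed

lemma bdd_on_pert: "bdd_on A u \<Longrightarrow> bdd_on A (\<lambda>z. u z + \<sigma> * a * (if z = y then 1 else 0))"
proof -
  assume "bdd_on A u"
  then obtain M where M: "\<forall>x\<in>A. \<bar>u x\<bar> \<le> M" unfolding bdd_on_def by blast
  show ?thesis unfolding bdd_on_def
  proof (intro exI[of _ "M + \<bar>\<sigma> * a\<bar>"] ballI)
    fix z assume z: "z \<in> A"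
    have "\<bar>u z + \<sigma> * a * (if z = y then 1 else 0)\<bar> \<le> \<bar>u z\<bar> + \<bar>\<sigma> * a * (if z = y then 1 else 0)\<bar>"
      by (rule abs_triangle_ineq)
    also have "\<dots> \<le> M + \<bar>\<sigma> * a\<bar>"
    proof -
      have "\<bar>\<sigma> * a * (if z = y then 1 else 0)\<bar> \<le> \<bar>\<sigma> * a\<bar>" by (cases "z = y") auto
      thus ?thesis using M z by fastforce
    qed
    finally show "\<bar>u z + \<sigma> * a * (if z = y then 1 else 0)\<bar> \<le> M + \<bar>\<sigma> * a\<bar>" .
  qed
qed

lemma subsol:
  fixes \<Omega> :: "(real^'n::finite) set"
    and F :: "real^'n \<Rightarrow> real \<Rightarrow> real^'n \<Rightarrow> real^'n^'n \<Rightarrow> real \<Rightarrow> real"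
    and I :: "(real^'n \<Rightarrow> real) \<Rightarrow> real^'n \<Rightarrow> real"
    and S :: "real \<Rightarrow> real^'n \<Rightarrow> (real^'n \<Rightarrow> real) \<Rightarrow> real \<Rightarrow> real"
    and Ih :: "real \<Rightarrow> (real^'n \<Rightarrow> real) \<Rightarrow> real^'n \<Rightarrow> real"
    and Vh :: "real \<Rightarrow> real^'n \<Rightarrow> real"
  assumes mono: "scheme_monotone \<Omega> S"
    and consistent: "nonlocally_consistent \<Omega> F I S Ih"
    and T: "condition_T \<Omega> S"
    and sol: "\<forall>h>0. scheme_solution \<Omega> S Ih h (Vh h)"
    and B: "\<forall>h>0. \<forall>y\<in>closure \<Omega>. \<bar>Vh h y\<bar> \<le> B"
  shows "visc_sub \<Omega> F I (\<lambda>z. real_of_ereal (hr_limsup (closure \<Omega>) Vh z))"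
proof -
  define C where "C = closure \<Omega>"
  define V where "V = (\<lambda>z. real_of_ereal (hr_limsup C Vh z))"
  have B': "\<forall>h>0. \<forall>y\<in>C. \<bar>Vh h y\<bar> \<le> B" using B C_def by simp
  have Vr: "\<And>y. y \<in> C \<Longrightarrow> hr_limsup C Vh y = ereal (V y)" using hr_real(1)[OF B'] V_def by metis
  have Vb: "\<forall>y\<in>C. \<bar>V y\<bar> \<le> B" using hr_real(2)[OF B'] V_def by metis
  obtain f :: "'n pt \<Rightarrow> real \<Rightarrow> real" where
    flim: "\<forall>x\<in>C. ((\<lambda>(y, h). f y h) \<longlongrightarrow> 0) (inf (nhds x) (principal C) \<times>\<^sub>F at_right 0)"
    and fT: "\<forall>h>0. \<forall>x\<in>C. \<forall>l \<phi>. bdd_on C \<phi> \<longrightarrow>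
          (\<forall>\<sigma>\<in>{1, -1}.
             \<bar>S h x (ext C (\<lambda>y. \<phi> y + \<sigma> * exp (-1/h) * (if y = x then 1 else 0))) l
              - S h x (ext C \<phi>) l\<bar> \<le> f x h)"
    using T unfolding condition_T_def C_def by blast
  have main: "Flower \<Omega> F x (V x) (grad \<phi> x) (hess \<phi> x) (I (ext C V) x) \<le> 0"
    if \<phi>: "C2_nbhd C \<phi>" and x: "x \<in> C" and lm: "loc_max_rel C (\<lambda>y. V y - \<phi> y) x" for \<phi> x
  proof -
    obtain \<psi> \<rho> where \<psi>: "C2_nbhd C \<psi>" "bdd_on C \<psi>" "\<psi> x = V x" "grad \<psi> x = grad \<phi> x" "hess \<psi> x = hess \<phi> x"
      "\<forall>y\<in>C. V y - \<psi> y \<le> - min ((norm (y - x))^4) 1" "continuous_on C \<psi>"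
      and \<rho>: "\<rho> > 0" "\<forall>y\<in>C. dist y x \<ge> \<rho> \<longrightarrow> \<psi> y \<ge> B + 1"
      using testfn[OF \<phi> _ x lm Vb] C_def by auto
    have core: "\<exists>h y \<xi>. 0 < h \<and> h < h0 \<and> y \<in> C \<and> dist y x < \<eta> \<and> \<bar>\<xi>\<bar> < \<eta> \<and> (\<forall>z\<in>C. Vh h z \<le> \<psi> z + \<xi>)
          \<and> Vh h y = \<psi> y + \<xi> - exp (- 1 / h)" if "\<eta> > 0" "h0 > 0" for \<eta> h0
    proof (rule coreA[OF _ x B' \<psi>(7) _ _ \<rho> that])
      show "closed C" by (simp add: C_def)
      show "hr_limsup C Vh x = ereal (\<psi> x)" using Vr[OF x] \<psi>(3) by simp
      show "\<forall>z\<in>C. hr_limsup C Vh z \<le> ereal (\<psi> z - min (norm (z - x) ^ 4) 1)"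
        using Vr \<psi>(6) by (auto simp: algebra_simps)
    qed
    define G where "G = at_right (0::real) \<times>\<^sub>F inf (nhds x) (principal C) \<times>\<^sub>F nhds (0::real)"
    define s where "s = (\<lambda>(h, y, \<xi>). ereal (S h y (ext C (\<lambda>z. \<psi> z + \<xi>)) (Ih h (ext C (Vh h)) y)))"
    have bndu: "\<exists>M. \<forall>h>0. \<forall>y\<in>closure \<Omega>. \<bar>Vh h y\<bar> \<le> M" using B by blast
    have cons: "Flower \<Omega> F x (\<psi> x) (grad \<psi> x) (hess \<psi> x) (I (ext C (\<lambda>z. real_of_ereal (hr_limsup C Vh z))) x)
        \<le> Liminf G s"
      using consistent[unfolded nonlocally_consistent_def, rule_format, OF bndu \<psi>(1)[unfolded C_def] x[unfolded C_def]]
      unfolding Let_def G_def s_def C_def by blast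
    have "Liminf G s \<le> 0"
    proof (rule ereal_le_epsilon)
      fix e :: ereal assume e: "0 < e"
      show "Liminf G s \<le> 0 + e"
      proof (cases e)
        case (real r)
        with e have r: "r > 0" by simp
        have "frequently (\<lambda>p. s p \<le> ereal r) G" unfolding G_def
        proof (rule G_freq[OF flim[rule_format, OF x] r core])
          fix h y \<xi> assume h: "0 < h" and y: "y \<in> C"
            and Q: "(\<forall>z\<in>C. Vh h z \<le> \<psi> z + \<xi>) \<and> Vh h y = \<psi> y + \<xi> - exp (- 1 / h)"
            and fy: "f y h < r"
          define l where "l = Ih h (ext C (Vh h)) y"
          define W where "W = (\<lambda>z. (\<psi> z + \<xi>) + (-1) * exp (-1/h) * (if z = y then 1 else 0))"
          have bpx: "bdd_on C (\<lambda>z. \<psi> z + \<xi>)" by (rule bdd_on_add_const[OF \<psi>(2)])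
          have bW: "bdd_on C W" unfolding W_def by (rule bdd_on_pert[OF bpx])
          have solh: "scheme_solution \<Omega> S Ih h (Vh h)" using sol h by auto
          have bV: "bdd_on C (Vh h)" using solh by (simp add: scheme_solution_def C_def)
          have S0: "S h y (ext C (Vh h)) l = 0" using solh y by (simp add: scheme_solution_def C_def l_def)
          have mono': "\<And>V W. bdd_on C V \<Longrightarrow> bdd_on C W \<Longrightarrow> (\<forall>z\<in>C. V z \<ge> W z) \<Longrightarrow> V y = W y
              \<Longrightarrow> S h y (ext C V) l \<le> S h y (ext C W) l"
            using mono h y unfolding scheme_monotone_def C_def by blast
          have "S h y (ext C W) l \<le> S h y (ext C (Vh h)) l"
          proof (rule mono'[OF bW bV])
            show "\<forall>z\<in>C. Vh h z \<le> W z" using Q by (auto simp: W_def)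
            show "W y = Vh h y" using Q by (simp add: W_def)
          qed
          moreover have "\<bar>S h y (ext C W) l - S h y (ext C (\<lambda>z. \<psi> z + \<xi>)) l\<bar> \<le> f y h"
            using fT[rule_format, OF h y bpx, of "-1" l] by (simp add: W_def)
          ultimately have "S h y (ext C (\<lambda>z. \<psi> z + \<xi>)) l \<le> r" using S0 fy by linarith
          thus "s (h, y, \<xi>) \<le> ereal r" by (simp add: s_def l_def)
        qed
        hence "Liminf G s \<le> ereal r" by (rule freq_Liminf)
        thus ?thesis using real by simp
      qed (use e in auto)
    qed
    with cons have "Flower \<Omega> F x (\<psi> x) (grad \<psi> x) (hess \<psi> x) (I (ext C (\<lambda>z. real_of_ereal (hr_limsup C Vh z))) x) \<le> 0"
      by (rule order_trans)
    thus ?thesis using \<psi>(3,4,5) by (simp add: V_def)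
  qed
  show ?thesis unfolding visc_sub_def
  proof (intro conjI allI impI)
    show "usc_on (closure \<Omega>) (\<lambda>z. real_of_ereal (hr_limsup (closure \<Omega>) Vh z))"
      using usc_hr[OF B] .
    fix \<phi> x assume "C2_nbhd (closure \<Omega>) \<phi>" "x \<in> closure \<Omega>"
      "loc_max_rel (closure \<Omega>) (\<lambda>y. real_of_ereal (hr_limsup (closure \<Omega>) Vh y) - \<phi> y) x"
    thus "Flower \<Omega> F x (real_of_ereal (hr_limsup (closure \<Omega>) Vh x)) (grad \<phi> x) (hess \<phi> x)
        (I (ext (closure \<Omega>) (\<lambda>z. real_of_ereal (hr_limsup (closure \<Omega>) Vh z))) x) \<le> 0"
      using main unfolding C_def V_def by blast
  qed
qed

lemma C2_neg:
  assumes "C2_nbhd C f" "x \<in> C"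
  shows "C2_nbhd C (\<lambda>y. - f y) \<and> grad (\<lambda>y. - f y) x = - grad f x \<and> hess (\<lambda>y. - f y) x = - hess f x"
proof -
  obtain U where U: "open U" "C \<subseteq> U" "C2w U f (grad f) (hess f)" using C2_nbhd_C2w[OF assms(1)] by blast
  note N = C2w_minus[OF U(3)]
  show ?thesis
    using C2w_C2_nbhd[OF N U(1,2)] C2w_grad[OF N] C2w_hess[OF N _ U(1)] U(2) assms(2) by auto
qed

lemma lsc_hr:
  assumes B: "\<forall>h>0. \<forall>y\<in>C. \<bar>u h y\<bar> \<le> B"
  shows "lsc_on C (\<lambda>z. real_of_ereal (hr_liminf C u z))"
proof -
  have B': "\<forall>h>0. \<forall>y\<in>C. \<bar>- u h y\<bar> \<le> B" using B by simp
  have e: "(\<lambda>z. real_of_ereal (hr_limsup C (\<lambda>h y. - u h y) z)) = (\<lambda>z. - real_of_ereal (hr_liminf C u z))"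
    by (simp add: hr_neg)
  have usc: "usc_on C (\<lambda>z. - real_of_ereal (hr_liminf C u z))" using usc_hr[OF B'] e by simp
  show ?thesis unfolding lsc_on_def
  proof
    fix z assume z: "z \<in> C"
    have "Limsup (inf (nhds z) (principal C)) (\<lambda>y. ereal (- real_of_ereal (hr_liminf C u y)))
        \<le> ereal (- real_of_ereal (hr_liminf C u z))"
      using usc z unfolding usc_on_def usc_env_def by blast
    hence "- Liminf (inf (nhds z) (principal C)) (\<lambda>y. ereal (real_of_ereal (hr_liminf C u y)))
        \<le> - ereal (real_of_ereal (hr_liminf C u z))"
      by (simp add: ereal_Limsup_uminus[symmetric])
    thus "ereal (real_of_ereal (hr_liminf C u z)) \<le> lsc_env C (\<lambda>z. real_of_ereal (hr_liminf C u z)) z"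
      unfolding lsc_env_def by (simp add: ereal_uminus_le_reorder)
  qed
qed

lemma supersol:
  fixes \<Omega> :: "(real^'n::finite) set"
    and F :: "real^'n \<Rightarrow> real \<Rightarrow> real^'n \<Rightarrow> real^'n^'n \<Rightarrow> real \<Rightarrow> real"
    and I :: "(real^'n \<Rightarrow> real) \<Rightarrow> real^'n \<Rightarrow> real"
    and S :: "real \<Rightarrow> real^'n \<Rightarrow> (real^'n \<Rightarrow> real) \<Rightarrow> real \<Rightarrow> real"
    and Ih :: "real \<Rightarrow> (real^'n \<Rightarrow> real) \<Rightarrow> real^'n \<Rightarrow> real"
    and Vh :: "real \<Rightarrow> real^'n \<Rightarrow> real"
  assumes mono: "scheme_monotone \<Omega> S"
    and consistent: "nonlocally_consistent \<Omega> F I S Ih"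
    and T: "condition_T \<Omega> S"
    and sol: "\<forall>h>0. scheme_solution \<Omega> S Ih h (Vh h)"
    and B: "\<forall>h>0. \<forall>y\<in>closure \<Omega>. \<bar>Vh h y\<bar> \<le> B"
  shows "visc_super \<Omega> F I (\<lambda>z. real_of_ereal (hr_liminf (closure \<Omega>) Vh z))"
proof -
  define C where "C = closure \<Omega>"
  define V where "V = (\<lambda>z. real_of_ereal (hr_liminf C Vh z))"
  define u where "u = (\<lambda>h y. - Vh h y)"
  have B': "\<forall>h>0. \<forall>y\<in>C. \<bar>Vh h y\<bar> \<le> B" using B C_def by simp
  have Bu: "\<forall>h>0. \<forall>y\<in>C. \<bar>u h y\<bar> \<le> B" using B' by (simp add: u_def)
  have Vr: "\<And>y. y \<in> C \<Longrightarrow> hr_limsup C u y = ereal (- V y)"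
    using hr_real(3)[OF B'] V_def unfolding u_def hr_neg by (metis uminus_ereal.simps(1))
  have Vb: "\<forall>y\<in>C. \<bar>- V y\<bar> \<le> B" using hr_real(4)[OF B'] V_def by simp
  obtain f :: "'n pt \<Rightarrow> real \<Rightarrow> real" where
    flim: "\<forall>x\<in>C. ((\<lambda>(y, h). f y h) \<longlongrightarrow> 0) (inf (nhds x) (principal C) \<times>\<^sub>F at_right 0)"
    and fT: "\<forall>h>0. \<forall>x\<in>C. \<forall>l \<phi>. bdd_on C \<phi> \<longrightarrow>
          (\<forall>\<sigma>\<in>{1, -1}.
             \<bar>S h x (ext C (\<lambda>y. \<phi> y + \<sigma> * exp (-1/h) * (if y = x then 1 else 0))) l
              - S h x (ext C \<phi>) l\<bar> \<le> f x h)"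
    using T unfolding condition_T_def C_def by blast
  have main: "Fupper \<Omega> F x (V x) (grad \<phi> x) (hess \<phi> x) (I (ext C V) x) \<ge> 0"
    if \<phi>: "C2_nbhd C \<phi>" and x: "x \<in> C" and lm: "loc_min_rel C (\<lambda>y. V y - \<phi> y) x" for \<phi> x
  proof -
    have n\<phi>: "C2_nbhd C (\<lambda>y. - \<phi> y)" "grad (\<lambda>y. - \<phi> y) x = - grad \<phi> x" "hess (\<lambda>y. - \<phi> y) x = - hess \<phi> x"
      using C2_neg[OF \<phi> x] by auto
    have lm': "loc_max_rel C (\<lambda>y. (- V y) - (- \<phi> y)) x"
    proof -
      obtain e where e: "e > 0" "\<forall>y\<in>C \<inter> ball x e. V x - \<phi> x \<le> V y - \<phi> y"
        using lm unfolding loc_min_rel_def by blast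
      show ?thesis unfolding loc_max_rel_def
      proof (rule exI[of _ e], intro conjI ballI)
        fix y assume "y \<in> C \<inter> ball x e"
        hence "V x - \<phi> x \<le> V y - \<phi> y" using e by blast
        thus "- V y - - \<phi> y \<le> - V x - - \<phi> x" by linarith
      qed (use e in simp)
    qed
    obtain \<psi>' \<rho> where \<psi>': "C2_nbhd C \<psi>'" "bdd_on C \<psi>'" "\<psi>' x = - V x" "grad \<psi>' x = grad (\<lambda>y. - \<phi> y) x"
      "hess \<psi>' x = hess (\<lambda>y. - \<phi> y) x"
      "\<forall>y\<in>C. - V y - \<psi>' y \<le> - min ((norm (y - x))^4) 1" "continuous_on C \<psi>'"
      and \<rho>: "\<rho> > 0" "\<forall>y\<in>C. dist y x \<ge> \<rho> \<longrightarrow> \<psi>' y \<ge> B + 1"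
      using testfn[OF n\<phi>(1) _ x lm' Vb] C_def by auto
    define \<psi> where "\<psi> = (\<lambda>y. - \<psi>' y)"
    have n\<psi>: "C2_nbhd C \<psi>" "grad \<psi> x = grad \<phi> x" "hess \<psi> x = hess \<phi> x"
      using C2_neg[OF \<psi>'(1) x] \<psi>'(4,5) n\<phi>(2,3) unfolding \<psi>_def by auto
    have b\<psi>: "bdd_on C \<psi>" using \<psi>'(2) unfolding bdd_on_def \<psi>_def by simp
    have core: "\<exists>h y \<xi>. 0 < h \<and> h < h0 \<and> y \<in> C \<and> dist y x < \<eta> \<and> \<bar>\<xi>\<bar> < \<eta> \<and>
          ((\<forall>z\<in>C. \<psi> z + \<xi> \<le> Vh h z) \<and> Vh h y = \<psi> y + \<xi> + exp (- 1 / h))" if "\<eta> > 0" "h0 > 0" for \<eta> h0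
    proof -
      have "\<exists>h y \<xi>. 0 < h \<and> h < h0 \<and> y \<in> C \<and> dist y x < \<eta> \<and> \<bar>\<xi>\<bar> < \<eta> \<and> (\<forall>z\<in>C. u h z \<le> \<psi>' z + \<xi>)
          \<and> u h y = \<psi>' y + \<xi> - exp (- 1 / h)"
      proof (rule coreA[OF _ x Bu \<psi>'(7) _ _ \<rho> that])
        show "closed C" by (simp add: C_def)
        show "hr_limsup C u x = ereal (\<psi>' x)" using Vr[OF x] \<psi>'(3) by simp
        show "\<forall>z\<in>C. hr_limsup C u z \<le> ereal (\<psi>' z - min (norm (z - x) ^ 4) 1)"
          using Vr \<psi>'(6) by (auto simp: algebra_simps)
      qed
      then obtain h y \<xi> where hy: "0 < h" "h < h0" "y \<in> C" "dist y x < \<eta>" "\<bar>\<xi>\<bar> < \<eta>" "\<forall>z\<in>C. u h z \<le> \<psi>' z + \<xi>"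
          "u h y = \<psi>' y + \<xi> - exp (- 1 / h)" by blast
      show ?thesis
        by (rule exI[of _ h], rule exI[of _ y], rule exI[of _ "- \<xi>"])
           (use hy in \<open>auto simp: u_def \<psi>_def\<close>)
    qed
    define G where "G = at_right (0::real) \<times>\<^sub>F inf (nhds x) (principal C) \<times>\<^sub>F nhds (0::real)"
    define s where "s = (\<lambda>(h, y, \<xi>). ereal (S h y (ext C (\<lambda>z. \<psi> z + \<xi>)) (Ih h (ext C (Vh h)) y)))"
    have bndu: "\<exists>M. \<forall>h>0. \<forall>y\<in>closure \<Omega>. \<bar>Vh h y\<bar> \<le> M" using B by blast
    have cons: "Limsup G s \<le> Fupper \<Omega> F x (\<psi> x) (grad \<psi> x) (hess \<psi> x) (I (ext C (\<lambda>z. real_of_ereal (hr_liminf C Vh z))) x)"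
      using consistent[unfolded nonlocally_consistent_def, rule_format, OF bndu n\<psi>(1)[unfolded C_def] x[unfolded C_def]]
      unfolding Let_def G_def s_def C_def by blast
    have "0 \<le> Limsup G s"
    proof (rule ereal_le_epsilon)
      fix e :: ereal assume e: "0 < e"
      show "0 \<le> Limsup G s + e"
      proof (cases e)
        case (real r)
        with e have r: "r > 0" by simp
        have "frequently (\<lambda>p. s p \<ge> ereal (- r)) G" unfolding G_def
        proof (rule G_freq[OF flim[rule_format, OF x] r core])
          fix h y \<xi> assume h: "0 < h" and y: "y \<in> C"
            and Q: "(\<forall>z\<in>C. \<psi> z + \<xi> \<le> Vh h z) \<and> Vh h y = \<psi> y + \<xi> + exp (- 1 / h)"
            and fy: "f y h < r"
          define l where "l = Ih h (ext C (Vh h)) y"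
          define W where "W = (\<lambda>z. (\<psi> z + \<xi>) + 1 * exp (-1/h) * (if z = y then 1 else 0))"
          have bpx: "bdd_on C (\<lambda>z. \<psi> z + \<xi>)" by (rule bdd_on_add_const[OF b\<psi>])
          have bW: "bdd_on C W" unfolding W_def by (rule bdd_on_pert[OF bpx])
          have solh: "scheme_solution \<Omega> S Ih h (Vh h)" using sol h by auto
          have bV: "bdd_on C (Vh h)" using solh by (simp add: scheme_solution_def C_def)
          have S0: "S h y (ext C (Vh h)) l = 0" using solh y by (simp add: scheme_solution_def C_def l_def)
          have mono': "\<And>V W. bdd_on C V \<Longrightarrow> bdd_on C W \<Longrightarrow> (\<forall>z\<in>C. V z \<ge> W z) \<Longrightarrow> V y = W y
              \<Longrightarrow> S h y (ext C V) l \<le> S h y (ext C W) l"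
            using mono h y unfolding scheme_monotone_def C_def by blast
          have "S h y (ext C (Vh h)) l \<le> S h y (ext C W) l"
          proof (rule mono'[OF bV bW])
            show "\<forall>z\<in>C. W z \<le> Vh h z" using Q by (auto simp: W_def)
            show "Vh h y = W y" using Q by (simp add: W_def)
          qed
          moreover have "\<bar>S h y (ext C W) l - S h y (ext C (\<lambda>z. \<psi> z + \<xi>)) l\<bar> \<le> f y h"
            using fT[rule_format, OF h y bpx, of 1 l] by (simp add: W_def)
          ultimately have "S h y (ext C (\<lambda>z. \<psi> z + \<xi>)) l \<ge> - r" using S0 fy by linarith
          thus "s (h, y, \<xi>) \<ge> ereal (- r)" by (simp add: s_def l_def)
        qed
        hence "Limsup G s \<ge> ereal (- r)" by (rule freq_Limsup)
        thus ?thesis using real by (cases "Limsup G s") auto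
      qed (use e in auto)
    qed
    with cons have "0 \<le> Fupper \<Omega> F x (\<psi> x) (grad \<psi> x) (hess \<psi> x) (I (ext C (\<lambda>z. real_of_ereal (hr_liminf C Vh z))) x)"
      by (rule order_trans[rotated])
    moreover have "\<psi> x = V x" using \<psi>'(3) by (simp add: \<psi>_def)
    ultimately show ?thesis using n\<psi>(2,3) by (simp add: V_def)
  qed
  show ?thesis unfolding visc_super_def
  proof (intro conjI allI impI)
    show "lsc_on (closure \<Omega>) (\<lambda>z. real_of_ereal (hr_liminf (closure \<Omega>) Vh z))"
      using lsc_hr[OF B] .
    fix \<phi> x assume "C2_nbhd (closure \<Omega>) \<phi>" "x \<in> closure \<Omega>"
      "loc_min_rel (closure \<Omega>) (\<lambda>y. real_of_ereal (hr_liminf (closure \<Omega>) Vh y) - \<phi> y) x"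
    thus "Fupper \<Omega> F x (real_of_ereal (hr_liminf (closure \<Omega>) Vh x)) (grad \<phi> x) (hess \<phi> x)
        (I (ext (closure \<Omega>) (\<lambda>z. real_of_ereal (hr_liminf (closure \<Omega>) Vh z))) x) \<ge> 0"
      using main unfolding C_def V_def by blast
  qed
qed

lemma super_transfer:
  assumes eq: "\<forall>x\<in>closure \<Omega>. V x = W x" and W: "visc_super \<Omega> F I W"
  shows "visc_super \<Omega> F I V"
proof -
  define C where "C = closure \<Omega>"
  have ext: "ext C V = ext C W" using eq by (auto simp: ext_def C_def fun_eq_iff)
  have lsc: "lsc_env C V z = lsc_env C W z" for z
    unfolding lsc_env_def
    by (rule Liminf_eq, rule eventually_mono[OF ev_princ]) (use eq in \<open>auto simp: C_def\<close>)
  have lm: "loc_min_rel C (\<lambda>y. V y - \<phi> y) x = loc_min_rel C (\<lambda>y. W y - \<phi> y) x" if "x \<in> C" for \<phi> x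
    using eq that unfolding loc_min_rel_def C_def by auto
  have lsc': "lsc_on C V" unfolding lsc_on_def
  proof
    fix z assume z: "z \<in> C"
    have "lsc_on C W" using W unfolding visc_super_def C_def by blast
    hence "ereal (W z) \<le> lsc_env C W z" using z unfolding lsc_on_def by blast
    moreover have "V z = W z" using eq z by (simp add: C_def)
    ultimately show "ereal (V z) \<le> lsc_env C V z" using lsc[of z] by simp
  qed
  show ?thesis unfolding visc_super_def
  proof (intro conjI allI impI)
    show "lsc_on (closure \<Omega>) V" using lsc' by (simp add: C_def)
    fix \<phi> x assume a: "C2_nbhd (closure \<Omega>) \<phi>" "x \<in> closure \<Omega>" "loc_min_rel (closure \<Omega>) (\<lambda>y. V y - \<phi> y) x"
    have "loc_min_rel (closure \<Omega>) (\<lambda>y. W y - \<phi> y) x" using a(3) lm[of x \<phi>] a(2) by (simp add: C_def)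
    hence "0 \<le> Fupper \<Omega> F x (W x) (grad \<phi> x) (hess \<phi> x) (I (ext (closure \<Omega>) W) x)"
      using W a(1,2) unfolding visc_super_def by blast
    thus "0 \<le> Fupper \<Omega> F x (V x) (grad \<phi> x) (hess \<phi> x) (I (ext (closure \<Omega>) V) x)"
      using eq a(2) ext by (simp add: C_def)
  qed
qed

theorem theorem4p11:
  fixes \<Omega> :: "(real^'n::finite) set"
    and F :: "real^'n \<Rightarrow> real \<Rightarrow> real^'n \<Rightarrow> real^'n^'n \<Rightarrow> real \<Rightarrow> real"
    and I :: "(real^'n \<Rightarrow> real) \<Rightarrow> real^'n \<Rightarrow> real"
    and S :: "real \<Rightarrow> real^'n \<Rightarrow> (real^'n \<Rightarrow> real) \<Rightarrow> real \<Rightarrow> real"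
    and Ih :: "real \<Rightarrow> (real^'n \<Rightarrow> real) \<Rightarrow> real^'n \<Rightarrow> real"
    and Vh :: "real \<Rightarrow> real^'n \<Rightarrow> real"
  assumes F_locbdd: "locally_bounded_on (Fdom \<Omega>) (Fun5 F)"
    and comparison: "comparison_principle \<Omega> F I"
    and Ih_B: "\<forall>h>0. \<forall>u. bdd_on (closure \<Omega>) u \<longrightarrow> bdd_on (closure \<Omega>) (Ih h (ext (closure \<Omega>) u))"
    and mono: "scheme_monotone \<Omega> S"
    and stable: "scheme_stable \<Omega> S Ih"
    and consistent: "nonlocally_consistent \<Omega> F I S Ih"
    and T: "condition_T \<Omega> S"
    and sol: "\<forall>h>0. scheme_solution \<Omega> S Ih h (Vh h)"
  shows "\<exists>V. bdd_on (closure \<Omega>) V \<and> visc_sol \<Omega> F I V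
           \<and> (\<forall>W. bdd_on (closure \<Omega>) W \<and> visc_sol \<Omega> F I W \<longrightarrow> (\<forall>x\<in>closure \<Omega>. W x = V x))
           \<and> (\<forall>K. compact K \<and> K \<subseteq> closure \<Omega> \<longrightarrow> uniform_limit K Vh V (at_right 0))"
proof -
  define C where "C = closure \<Omega>"
  obtain B where B0: "\<forall>h>0. \<forall>V. scheme_solution \<Omega> S Ih h V \<longrightarrow> (\<forall>x\<in>closure \<Omega>. \<bar>V x\<bar> \<le> B)"
    using stable unfolding scheme_stable_def by blast
  have B: "\<forall>h>0. \<forall>y\<in>closure \<Omega>. \<bar>Vh h y\<bar> \<le> B"
  proof (intro allI impI ballI)
    fix h :: real and y assume h: "h > 0" and y: "y \<in> closure \<Omega>"
    have "scheme_solution \<Omega> S Ih h (Vh h)" using sol h by blast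
    thus "\<bar>Vh h y\<bar> \<le> B" using B0 h y by blast
  qed
  have B': "\<forall>h>0. \<forall>y\<in>C. \<bar>Vh h y\<bar> \<le> B" using B C_def by simp
  define V where "V = (\<lambda>z. real_of_ereal (hr_limsup C Vh z))"
  define Vl where "Vl = (\<lambda>z. real_of_ereal (hr_liminf C Vh z))"
  have sub: "visc_sub \<Omega> F I V" unfolding V_def C_def by (rule subsol[OF mono consistent T sol B])
  have sup: "visc_super \<Omega> F I Vl" unfolding Vl_def C_def by (rule supersol[OF mono consistent T sol B])
  have Vr: "\<And>y. y \<in> C \<Longrightarrow> hr_limsup C Vh y = ereal (V y)" unfolding V_def by (rule hr_real(1)[OF B'])
  have Vlr: "\<And>y. y \<in> C \<Longrightarrow> hr_liminf C Vh y = ereal (Vl y)" unfolding Vl_def by (rule hr_real(3)[OF B'])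
  have bV: "bdd_on C V" unfolding bdd_on_def by (rule exI[of _ B]) (use hr_real(2)[OF B'] in \<open>simp add: V_def\<close>)
  have bVl: "bdd_on C Vl" unfolding bdd_on_def by (rule exI[of _ B]) (use hr_real(4)[OF B'] in \<open>simp add: Vl_def\<close>)
  have cp: "\<And>U W. bdd_on C U \<Longrightarrow> bdd_on C W \<Longrightarrow> visc_sub \<Omega> F I U \<Longrightarrow> visc_super \<Omega> F I W \<Longrightarrow> \<forall>x\<in>C. U x \<le> W x"
    using comparison unfolding comparison_principle_def C_def by blast
  have le1: "\<forall>x\<in>C. V x \<le> Vl x" by (rule cp[OF bV bVl sub sup])
  have le2: "Vl x \<le> V x" if x: "x \<in> C" for x
  proof -
    have "hr_liminf C Vh x \<le> hr_limsup C Vh x"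
      unfolding hr_liminf_def hr_limsup_def by (rule Liminf_le_Limsup) (use F_nb[OF x] in simp)
    thus ?thesis using Vr[OF x] Vlr[OF x] by simp
  qed
  have eq: "\<forall>x\<in>C. V x = Vl x" using le1 le2 by (simp add: antisym)
  have supV: "visc_super \<Omega> F I V" by (rule super_transfer[OF _ sup]) (use eq in \<open>simp add: C_def\<close>)
  have solV: "visc_sol \<Omega> F I V" using sub supV by (simp add: visc_sol_def)
  have uniq: "\<forall>x\<in>C. W x = V x" if W: "bdd_on C W" "visc_sol \<Omega> F I W" for W
  proof -
    have "\<forall>x\<in>C. W x \<le> V x" by (rule cp[OF W(1) bV _ supV]) (use W(2) in \<open>simp add: visc_sol_def\<close>)
    moreover have "\<forall>x\<in>C. V x \<le> W x" by (rule cp[OF bV W(1) sub]) (use W(2) in \<open>simp add: visc_sol_def\<close>)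
    ultimately show ?thesis by (simp add: antisym)
  qed
  have unif: "uniform_limit K Vh V (at_right 0)" if K: "compact K" "K \<subseteq> C" for K
    unfolding uniform_limit_iff
  proof (intro allI impI)
    fix e :: real assume e: "e > 0"
    have up: "eventually (\<lambda>h. \<forall>y\<in>K. Vh h y - V y < e) (at_right 0)"
    proof (rule K4[OF K B'])
      show "\<forall>z\<in>K. \<forall>d>0. eventually (\<lambda>y. V y > V z - d) (inf (nhds z) (principal C))"
      proof (intro ballI allI impI)
        fix z and d :: real assume z: "z \<in> K" and d: "d > 0"
        have zC: "z \<in> C" using z K by auto
        have "lsc_on C Vl" using sup unfolding visc_super_def C_def by simp
        hence "ereal (Vl z) \<le> Liminf (inf (nhds z) (principal C)) (\<lambda>y. ereal (Vl y))"
          using zC unfolding lsc_on_def lsc_env_def by blast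
        moreover have "ereal (Vl z - d) < ereal (Vl z)" using d by simp
        ultimately have "ereal (Vl z - d) < Liminf (inf (nhds z) (principal C)) (\<lambda>y. ereal (Vl y))"
          by (meson less_le_trans)
        from eventually_conj[OF ev_princ less_LiminfD[OF this]]
        show "eventually (\<lambda>y. V y > V z - d) (inf (nhds z) (principal C))"
          by (rule eventually_mono) (use eq zC in auto)
      qed
      show "\<forall>z\<in>K. hr_limsup C Vh z < ereal (V z + e)" using Vr K e by auto
    qed
    have Bn: "\<forall>h>0. \<forall>y\<in>C. \<bar>- Vh h y\<bar> \<le> B" using B' by simp
    have lo: "eventually (\<lambda>h. \<forall>y\<in>K. - Vh h y - (- V y) < e) (at_right 0)"
    proof (rule K4[OF K Bn])
      show "\<forall>z\<in>K. \<forall>d>0. eventually (\<lambda>y. - V y > - V z - d) (inf (nhds z) (principal C))"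
      proof (intro ballI allI impI)
        fix z and d :: real assume z: "z \<in> K" and d: "d > 0"
        have zC: "z \<in> C" using z K by auto
        have "usc_on C V" using sub unfolding visc_sub_def C_def by simp
        hence "Limsup (inf (nhds z) (principal C)) (\<lambda>y. ereal (V y)) \<le> ereal (V z)"
          using zC unfolding usc_on_def usc_env_def by blast
        moreover have "ereal (V z) < ereal (V z + d)" using d by simp
        ultimately have "Limsup (inf (nhds z) (principal C)) (\<lambda>y. ereal (V y)) < ereal (V z + d)"
          by (meson le_less_trans)
        from Limsup_lessD[OF this]
        show "eventually (\<lambda>y. - V y > - V z - d) (inf (nhds z) (principal C))"
          by (rule eventually_mono) auto
      qed
      show "\<forall>z\<in>K. hr_limsup C (\<lambda>h y. - Vh h y) z < ereal (- V z + e)"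
        using Vlr K e eq by (auto simp: hr_neg)
    qed
    show "eventually (\<lambda>h. \<forall>y\<in>K. dist (Vh h y) (V y) < e) (at_right 0)"
      by (rule eventually_mono[OF eventually_conj[OF up lo]]) (auto simp: dist_real_def abs_less_iff)
  qed
  show ?thesis
  proof (rule exI[of _ V], intro conjI allI impI)
    show "bdd_on (closure \<Omega>) V" using bV by (simp add: C_def)
    show "visc_sol \<Omega> F I V" by (rule solV)
    fix W assume "bdd_on (closure \<Omega>) W \<and> visc_sol \<Omega> F I W"
    thus "\<forall>x\<in>closure \<Omega>. W x = V x" using uniq unfolding C_def by blast
  next
    fix K :: "'n pt set" assume "compact K \<and> K \<subseteq> closure \<Omega>"
    thus "uniform_limit K Vh V (at_right 0)" using unif unfolding C_def by blast
  qed
qed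

end
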